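(* Fix $k\in\mathbb{Z}_{\geq0}$. For $1\leq r\leq k$, in $\mathcal{A}_k$ we have $$p_r=\sum_{i=0}^{r-1}(-1)^i\,\underline{V^r_{i,wc}}+\sum_{i=1}^{r-1}(-1)^i(r-i)\,\underline{U^r_{i-1,wc}}+\sum_{i=1}^{r-2}(-1)^i\,\underline{U^r_{i-1,\overline{wc},\mathrm{left}}}.$$
   Context: Indices are elements of $\mathbb{Z}/(k+1)\mathbb{Z}$, identified with $[0,k]$. $\mathcal{A}_k$ is the associative $\mathbb{Z}$-algebra with generators $A_0,\dots,A_k$ subject only to $A_iA_{i+1}A_i=A_{i+1}A_iA_{i+1}$ for all $i$ and $A_iA_j=A_jA_i$ whenever $i-j\not\equiv\pm1\pmod{k+1}$. A word $A_{i_1\dots i_m}$ is a sequence of indices with value $A_{i_1}\cdots A_{i_m}$, weak length $m$ and support $\{i_1,\dots,i_m\}$. For a proper subset $A\subsetneq[0,k]$ with $|A|=s$, $d_A=A_{i_1\dots i_s}$ and $i_A=A_{i_s\dots i_1}$, where $(i_1,\dots,i_s)$ is any ordering of $A$ such that whenever $i,i+1\in A$, $i+1$ occurs before $i$ ($d_\emptyset=i_\emptyset=1$). Define $h_s=\sum_{A\in\binom{[0,k]}{s}}d_A$, $e_s=\sum_{A\in\binom{[0,k]}{s}}i_A$, $s_{(r-i,1^i)}=\sum_{j=0}^i(-1)^jh_{r-i+j}e_{i-j}$, and $p_r=\sum_{i=0}^{r-1}(-1)^is_{(r-i,1^i)}$. For a proper subset $S$, with $a$ the smallest element of $[0,k]$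 not in $S$, $I_S$ is the total order $a+1<\dots<k<0<\dots<a-1$. A word $u=A_{i_1\dots i_m}$ with proper support is a weak hook word of hook type $V$ (resp. $U$) if with respect to $I_{supp(u)}$, for some $j$, $i_1>\dots>i_j<i_{j+1}<\dots<i_m$ with left side $i_1,\dots,i_j$ and right side $i_j,\dots,i_m$ (resp. $i_1>\dots>i_j=i_{j+1}<\dots<i_m$ with left side $i_1,\dots,i_j$ and right side $i_{j+1},\dots,i_m$). $asc(u)$ is the number of $t$ with $i_t<i_{t+1}$. $u$ is $k$-connected if $supp(u)$ is an interval of $I_{supp(u)}$. Otherwise, among pairs of letters $a<c$ of $u$ with $a\not\equiv c-1\pmod{k+1}$ and no letter $b$ of $u$ with $a<b<c$, let $u_{min}$ be the smallest such $c$; it occurs once or twice (if twice, once on each side). $u$ is $k$-weak connected if it is $k$-connected or $u_{min}$ occurs twice. For $X\in\{U,V\}$, $X^r_{i,wc}$ is the set of $k$-weak connected weak hook words of type $X$, length $r$, $asc=i$; $X^r_{i,\overline{wc},\mathrm{left}}$ is the set of such words (type $X$, length $r$, $asc=i$) that are not $k$-weak connected and whose single occurrence of $u_{min}$ lies on the left side. For a finite set $S$ of words, $\underline{S}=\sum_{u\in S}u\in\mathcal{A}_k$. *)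

theory Defs
  imports Main "HOL-Library.Function_Algebras"
begin

text \<open>Elements of the free associative Z-algebra are finitely supported functions
  from words (lists of indices) to integer coefficients; addition is pointwise
  (Function_Algebras); multiplication is concatenation product (amul).\<close>

type_synonym falg = "nat list \<Rightarrow> int"

definition wd :: "nat list \<Rightarrow> falg" where
  "wd w = (\<lambda>x. if x = w then 1 else 0)"

definition amul :: "falg \<Rightarrow> falg \<Rightarrow> falg" where
  "amul f g = (\<lambda>w. \<Sum>n\<le>length w. f (take n w) * g (drop n w))"

definition smul :: "int \<Rightarrow> falg \<Rightarrow> falg" where
  "smul c f = (\<lambda>w. c * f w)"

text \<open>Successor of an index in Z/(k+1)Z, identified with [0,k].\<close>
definition isuc :: "nat \<Rightarrow> nat \<Rightarrow> nat" where
  "isuc k i = (i + 1) mod (k + 1)"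

text \<open>Defining relations of A_k, as pairs of words (p,q) meaning p = q.\<close>
definition rels :: "nat \<Rightarrow> (nat list \<times> nat list) set" where
  "rels k =
     {([i, isuc k i, i], [isuc k i, i, isuc k i]) | i. i \<le> k}
   \<union> {([i, j], [j, i]) | i j. i \<le> k \<and> j \<le> k \<and> isuc k i \<noteq> j \<and> isuc k j \<noteq> i}"

inductive_set rel_ideal :: "nat \<Rightarrow> falg set" for k where
  zero: "0 \<in> rel_ideal k"
| add: "x \<in> rel_ideal k \<Longrightarrow> y \<in> rel_ideal k \<Longrightarrow> x + y \<in> rel_ideal k"
| neg: "x \<in> rel_ideal k \<Longrightarrow> - x \<in> rel_ideal k"
| gen: "(p, q) \<in> rels k \<Longrightarrow> set a \<subseteq> {0..k} \<Longrightarrow> set b \<subseteq> {0..k} \<Longrightarrow>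
        wd (a @ p @ b) - wd (a @ q @ b) \<in> rel_ideal k"

definition aeq :: "nat \<Rightarrow> falg \<Rightarrow> falg \<Rightarrow> bool" where
  "aeq k f g \<longleftrightarrow> f - g \<in> rel_ideal k"

definition valid_order :: "nat \<Rightarrow> nat set \<Rightarrow> nat list \<Rightarrow> bool" where
  "valid_order k A w \<longleftrightarrow> distinct w \<and> set w = A \<and>
     (\<forall>x y. x < length w \<and> y < length w \<and> w ! y = isuc k (w ! x) \<longrightarrow> y < x)"

definition dword :: "nat \<Rightarrow> nat set \<Rightarrow> nat list" where
  "dword k A = (SOME w. valid_order k A w)"

definition d_el :: "nat \<Rightarrow> nat set \<Rightarrow> falg" where
  "d_el k A = wd (dword k A)"

definition i_el :: "nat \<Rightarrow> nat set \<Rightarrow> falg" where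
  "i_el k A = wd (rev (dword k A))"

definition h_el :: "nat \<Rightarrow> nat \<Rightarrow> falg" where
  "h_el k s = (\<Sum>A\<in>{A. A \<subseteq> {0..k} \<and> card A = s}. d_el k A)"

definition e_el :: "nat \<Rightarrow> nat \<Rightarrow> falg" where
  "e_el k s = (\<Sum>A\<in>{A. A \<subseteq> {0..k} \<and> card A = s}. i_el k A)"

definition hook_s :: "nat \<Rightarrow> nat \<Rightarrow> nat \<Rightarrow> falg" where
  "hook_s k r i = (\<Sum>j\<le>i. smul ((-1) ^ j) (amul (h_el k (r - i + j)) (e_el k (i - j))))"

definition p_el :: "nat \<Rightarrow> nat \<Rightarrow> falg" where
  "p_el k r = (\<Sum>i<r. smul ((-1) ^ i) (hook_s k r i))"

text \<open>a = smallest element of [0,k] not in S; the total order I_S is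
  a+1 < ... < k < 0 < ... < a-1, encoded via the rank (x - a - 1) mod (k+1).\<close>
definition amiss :: "nat \<Rightarrow> nat set \<Rightarrow> nat" where
  "amiss k S = (LEAST a. a \<le> k \<and> a \<notin> S)"

definition irank :: "nat \<Rightarrow> nat set \<Rightarrow> nat \<Rightarrow> nat" where
  "irank k S x = (x + k - amiss k S) mod (k + 1)"

definition ilt :: "nat \<Rightarrow> nat set \<Rightarrow> nat \<Rightarrow> nat \<Rightarrow> bool" where
  "ilt k S x y \<longleftrightarrow> irank k S x < irank k S y"

definition is_word :: "nat \<Rightarrow> nat list \<Rightarrow> bool" where
  "is_word k u \<longleftrightarrow> set u \<subseteq> {0..k} \<and> set u \<noteq> {0..k}"

text \<open>Hook type V with j letters on the left side (left: positions < j,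
  right: positions \<ge> j-1; 0-based).\<close>
definition hookV_at :: "nat \<Rightarrow> nat list \<Rightarrow> nat \<Rightarrow> bool" where
  "hookV_at k u j \<longleftrightarrow> 1 \<le> j \<and> j \<le> length u \<and>
     (\<forall>t. t + 1 < j \<longrightarrow> ilt k (set u) (u ! (t + 1)) (u ! t)) \<and>
     (\<forall>t. j - 1 \<le> t \<and> t + 1 < length u \<longrightarrow> ilt k (set u) (u ! t) (u ! (t + 1)))"

text \<open>Hook type U with j letters on the left side (left: positions < j,
  right: positions \<ge> j; 0-based).\<close>
definition hookU_at :: "nat \<Rightarrow> nat list \<Rightarrow> nat \<Rightarrow> bool" where
  "hookU_at k u j \<longleftrightarrow> 1 \<le> j \<and> j < length u \<and>
     (\<forall>t. t + 1 < j \<longrightarrow> ilt k (set u) (u ! (t + 1)) (u ! t)) \<and>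
     u ! (j - 1) = u ! j \<and>
     (\<forall>t. j \<le> t \<and> t + 1 < length u \<longrightarrow> ilt k (set u) (u ! t) (u ! (t + 1)))"

definition asc :: "nat \<Rightarrow> nat list \<Rightarrow> nat" where
  "asc k u = card {t. t + 1 < length u \<and> ilt k (set u) (u ! t) (u ! (t + 1))}"

definition k_connected :: "nat \<Rightarrow> nat list \<Rightarrow> bool" where
  "k_connected k u \<longleftrightarrow>
     (\<forall>x\<in>set u. \<forall>z\<in>set u. \<forall>y. y \<le> k \<and> y \<noteq> amiss k (set u) \<and>
        ilt k (set u) x y \<and> ilt k (set u) y z \<longrightarrow> y \<in> set u)"

definition gap_letters :: "nat \<Rightarrow> nat list \<Rightarrow> nat set" where
  "gap_letters k u = {c \<in> set u. \<exists>a\<in>set u. ilt k (set u) a c \<and> isuc k a \<noteq> c \<and>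
        \<not> (\<exists>b\<in>set u. ilt k (set u) a b \<and> ilt k (set u) b c)}"

definition is_umin :: "nat \<Rightarrow> nat list \<Rightarrow> nat \<Rightarrow> bool" where
  "is_umin k u c \<longleftrightarrow> c \<in> gap_letters k u \<and> (\<forall>c'\<in>gap_letters k u. \<not> ilt k (set u) c' c)"

definition weak_connected :: "nat \<Rightarrow> nat list \<Rightarrow> bool" where
  "weak_connected k u \<longleftrightarrow> k_connected k u \<or> (\<exists>c. is_umin k u c \<and> count_list u c = 2)"

definition V_wc :: "nat \<Rightarrow> nat \<Rightarrow> nat \<Rightarrow> nat list set" where
  "V_wc k r i = {u. is_word k u \<and> length u = r \<and> (\<exists>j. hookV_at k u j) \<and>
                    asc k u = i \<and> weak_connected k u}"

definition U_wc :: "nat \<Rightarrow> nat \<Rightarrow> nat \<Rightarrow> nat list set" where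
  "U_wc k r i = {u. is_word k u \<and> length u = r \<and> (\<exists>j. hookU_at k u j) \<and>
                    asc k u = i \<and> weak_connected k u}"

definition U_nwc_left :: "nat \<Rightarrow> nat \<Rightarrow> nat \<Rightarrow> nat list set" where
  "U_nwc_left k r i = {u. is_word k u \<and> length u = r \<and> asc k u = i \<and>
      \<not> weak_connected k u \<and>
      (\<exists>j c p. hookU_at k u j \<and> is_umin k u c \<and> p < j \<and> u ! p = c)}"

definition usum :: "nat list set \<Rightarrow> falg" where
  "usum S = (\<Sum>u\<in>S. wd u)"

end

theory Submission
  imports Defs
begin


lemma I_add: "x \<in> rel_ideal k \<Longrightarrow> y \<in> rel_ideal k \<Longrightarrow> x + y \<in> rel_ideal k"
  by (rule rel_ideal.add)
lemma I_neg: "x \<in> rel_ideal k \<Longrightarrow> - x \<in> rel_ideal k"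
  by (rule rel_ideal.neg)
lemma I_diff: "x \<in> rel_ideal k \<Longrightarrow> y \<in> rel_ideal k \<Longrightarrow> x - y \<in> rel_ideal k"
  using I_add[OF _ I_neg] by (metis diff_conv_add_uminus)
lemma I_sum: "(\<And>a. a \<in> A \<Longrightarrow> f a \<in> rel_ideal k) \<Longrightarrow> sum f A \<in> rel_ideal k"
  by (induction A rule: infinite_finite_induct) (auto intro: rel_ideal.zero I_add)

lemma smul_nat: "x \<in> rel_ideal k \<Longrightarrow> smul (int n) x \<in> rel_ideal k"
proof (induction n)
  case 0
  have "smul (int 0) x = 0" by (simp add: smul_def fun_eq_iff)
  then show ?case using rel_ideal.zero by metis
next
  case (Suc n)
  have "smul (int (Suc n)) x = smul (int n) x + x" by (simp add: smul_def fun_eq_iff algebra_simps)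
  then show ?case using Suc I_add by metis
qed

lemma I_smul: "x \<in> rel_ideal k \<Longrightarrow> smul c x \<in> rel_ideal k"
proof (cases "c \<ge> 0")
  case True
  assume x: "x \<in> rel_ideal k"
  then show ?thesis using smul_nat[OF x, of "nat c"] True by simp
next
  case False
  assume x: "x \<in> rel_ideal k"
  have e: "smul c x = - smul (int (nat (-c))) x" using False by (simp add: smul_def fun_eq_iff)
  have h: "- smul (int (nat (-c))) x \<in> rel_ideal k" by (rule I_neg[OF smul_nat[OF x]])
  show ?thesis by (subst e) (rule h)
qed

lemma smul_diff: "smul c (x - y) = smul c x - smul c y"
  by (simp add: smul_def fun_eq_iff algebra_simps)
lemma smul_sum: "smul c (sum f A) = (\<Sum>a\<in>A. smul c (f a))"
  by (induction A rule: infinite_finite_induct) (auto simp: smul_def fun_eq_iff algebra_simps)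

lemma sum_apply_fun: "(sum f A) w = (\<Sum>a\<in>A. (f a) w)" for f :: "'a \<Rightarrow> falg"
  by (induction A rule: infinite_finite_induct) auto

inductive weq :: "nat \<Rightarrow> nat list \<Rightarrow> nat list \<Rightarrow> bool" for k where
  refl: "weq k u u"
| step: "weq k u (a @ p @ b) \<Longrightarrow> (p, q) \<in> rels k \<Longrightarrow> set a \<subseteq> {0..k} \<Longrightarrow> set b \<subseteq> {0..k}
         \<Longrightarrow> weq k u (a @ q @ b)"
| stepb: "weq k u (a @ q @ b) \<Longrightarrow> (p, q) \<in> rels k \<Longrightarrow> set a \<subseteq> {0..k} \<Longrightarrow> set b \<subseteq> {0..k}
         \<Longrightarrow> weq k u (a @ p @ b)"

lemma weq_I: "weq k u v \<Longrightarrow> wd u - wd v \<in> rel_ideal k"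
proof (induction rule: weq.induct)
  case (refl u)
  then show ?case using rel_ideal.zero by (metis diff_self)
next
  case (step u a p b q)
  have "wd u - wd (a @ q @ b) = (wd u - wd (a @ p @ b)) + (wd (a @ p @ b) - wd (a @ q @ b))" by simp
  then show ?case using step rel_ideal.gen I_add by metis
next
  case (stepb u a q b p)
  have "wd u - wd (a @ p @ b) = (wd u - wd (a @ q @ b)) + - (wd (a @ p @ b) - wd (a @ q @ b))" by simp
  then show ?case using stepb rel_ideal.gen I_add I_neg by metis
qed

lemma weq_trans: "weq k v w \<Longrightarrow> weq k u v \<Longrightarrow> weq k u w"
proof (induction rule: weq.induct)
  case (refl u) then show ?case by simp
next
  case (step u a p b q) then show ?case by (blast intro: weq.step)
next
  case (stepb u a q b p) then show ?case by (blast intro: weq.stepb)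
qed

lemma weq_sym: "weq k u v \<Longrightarrow> weq k v u"
proof (induction rule: weq.induct)
  case (refl u) then show ?case by (rule weq.refl)
next
  case (step u a p b q)
  have "weq k (a @ q @ b) (a @ p @ b)"
    using weq.stepb[OF weq.refl[of k "a @ q @ b"]] step by blast
  then show ?case using weq_trans step by blast
next
  case (stepb u a q b p)
  have "weq k (a @ p @ b) (a @ q @ b)"
    using weq.step[OF weq.refl[of k "a @ p @ b"]] stepb by blast
  then show ?case using weq_trans stepb by blast
qed

lemma weq_ctx: "weq k u v \<Longrightarrow> set x \<subseteq> {0..k} \<Longrightarrow> set y \<subseteq> {0..k} \<Longrightarrow> weq k (x @ u @ y) (x @ v @ y)"
proof (induction rule: weq.induct)
  case (refl u) then show ?case by (simp add: weq.refl)
next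
  case (step u a p b q)
  have h: "weq k (x @ u @ y) ((x @ a) @ p @ (b @ y))" using step by simp
  have "weq k (x @ u @ y) ((x @ a) @ q @ (b @ y))" by (rule weq.step[OF h]) (use step in auto)
  then show ?case by simp
next
  case (stepb u a q b p)
  have h: "weq k (x @ u @ y) ((x @ a) @ q @ (b @ y))" using stepb by simp
  have "weq k (x @ u @ y) ((x @ a) @ p @ (b @ y))" by (rule weq.stepb[OF h]) (use stepb in auto)
  then show ?case by simp
qed

lemma weq_app: "weq k u u' \<Longrightarrow> weq k v v' \<Longrightarrow> set u' \<subseteq> {0..k} \<Longrightarrow> set v \<subseteq> {0..k} \<Longrightarrow>
   weq k (u @ v) (u' @ v')"
proof -
  assume a: "weq k u u'" "weq k v v'" "set u' \<subseteq> {0..k}" "set v \<subseteq> {0..k}"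
  have 1: "weq k (u @ v) (u' @ v)" using weq_ctx[OF a(1), of "[]" v] a by simp
  have 2: "weq k (u' @ v) (u' @ v')" using weq_ctx[OF a(2), of u' "[]"] a by simp
  show ?thesis using weq_trans[OF 2 1] .
qed

lemma rels_rev: "(p, q) \<in> rels k \<Longrightarrow> (rev p, rev q) \<in> rels k"
  unfolding rels_def by auto

lemma weq_rev: "weq k u v \<Longrightarrow> weq k (rev u) (rev v)"
proof (induction rule: weq.induct)
  case (refl u) then show ?case by (simp add: weq.refl)
next
  case (step u a p b q)
  then have h: "weq k (rev u) (rev b @ rev p @ rev a)" by simp
  have "weq k (rev u) (rev b @ rev q @ rev a)" by (rule weq.step[OF h]) (use step rels_rev in auto)
  then show ?case by simp
next
  case (stepb u a q b p)
  then have h: "weq k (rev u) (rev b @ rev q @ rev a)" by simp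
  have "weq k (rev u) (rev b @ rev p @ rev a)" by (rule weq.stepb[OF h]) (use stepb rels_rev in auto)
  then show ?case by simp
qed

lemma weq_swap: "x \<le> k \<Longrightarrow> y \<le> k \<Longrightarrow> isuc k x \<noteq> y \<Longrightarrow> isuc k y \<noteq> x \<Longrightarrow>
   set a \<subseteq> {0..k} \<Longrightarrow> set b \<subseteq> {0..k} \<Longrightarrow> weq k (a @ [x, y] @ b) (a @ [y, x] @ b)"
  by (rule weq.step[OF weq.refl]) (auto simp: rels_def)

lemma weq_commute: "x \<le> k \<Longrightarrow> (\<And>y. y \<in> set X \<Longrightarrow> y \<le> k \<and> isuc k x \<noteq> y \<and> isuc k y \<noteq> x)
   \<Longrightarrow> weq k (x # X) (X @ [x])"
proof (induction X)
  case Nil then show ?case by (simp add: weq.refl)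
next
  case (Cons y X)
  have X: "set X \<subseteq> {0..k}" using Cons.prems by auto
  have s: "weq k (x # y # X) (y # x # X)" using weq_swap[of x k y "[]" X] Cons.prems X by auto
  have "weq k (x # X) (X @ [x])" using Cons by auto
  then have "weq k ([y] @ (x # X) @ []) ([y] @ (X @ [x]) @ [])" using Cons.prems
    by (intro weq_ctx) auto
  then show ?case using weq_trans[OF _ s] by simp
qed

lemma amul_wd: "amul (wd u) (wd v) = wd (u @ v)"
proof
  fix w
  show "amul (wd u) (wd v) w = wd (u @ v) w"
  proof (cases "w = u @ v")
    case True
    have key: "n \<le> length w \<Longrightarrow> (take n w = u \<and> drop n w = v) = (n = length u)" for n
    proof
      assume a: "take n w = u \<and> drop n w = v" and n: "n \<le> length w"
      then have "length (take n w) = length u" by simp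
      then show "n = length u" using n by simp
    next
      assume "n = length u" then show "take n w = u \<and> drop n w = v" using True by simp
    qed
    have "amul (wd u) (wd v) w = (\<Sum>n\<le>length w. if n = length u then 1 else 0)"
      unfolding amul_def wd_def using key
      by (intro sum.cong) auto
    also have "\<dots> = 1" using True by simp
    finally show ?thesis using True by (simp add: wd_def)
  next
    case False
    have "amul (wd u) (wd v) w = (\<Sum>n\<le>length w. 0)"
      unfolding amul_def wd_def
    proof (rule sum.cong[OF HOL.refl])
      fix n
      show "(if take n w = u then 1 else 0) * (if drop n w = v then 1 else 0) = (0::int)"
      proof (cases "take n w = u")
        case True
        then have "drop n w \<noteq> v" using False append_take_drop_id by metis
        then show ?thesis by simp
      qed simp
    qed
    then show ?thesis using False by (simp add: wd_def)
  qed
qed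

lemma amul_sum_left: "amul (sum f A) g = (\<Sum>a\<in>A. amul (f a) g)"
proof
  fix w show "amul (sum f A) g w = (\<Sum>a\<in>A. amul (f a) g) w"
    unfolding amul_def sum_apply_fun sum_distrib_right by (rule sum.swap)
qed

lemma amul_sum_right: "amul g (sum f A) = (\<Sum>a\<in>A. amul g (f a))"
proof
  fix w show "amul g (sum f A) w = (\<Sum>a\<in>A. amul g (f a)) w"
    unfolding amul_def sum_apply_fun sum_distrib_left by (rule sum.swap)
qed



lemma amiss_props:
  assumes "S \<subseteq> {0..k}" "S \<noteq> {0..k}"
  shows "amiss k S \<le> k" "amiss k S \<notin> S" "\<And>b. b < amiss k S \<Longrightarrow> b \<in> S"
proof -
  have ex: "\<exists>a. a \<le> k \<and> a \<notin> S" using assms by auto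
  show "amiss k S \<le> k" "amiss k S \<notin> S" unfolding amiss_def using LeastI_ex[OF ex] by auto
  fix b assume "b < amiss k S"
  then show "b \<in> S" unfolding amiss_def using not_less_Least[of b "\<lambda>a. a \<le> k \<and> a \<notin> S"] ex
    LeastI_ex[OF ex] by auto
qed

lemma irank_eq:
  assumes "amiss k S \<le> k" "x \<le> k"
  shows "irank k S x = (if amiss k S < x then x - amiss k S - 1 else x + k - amiss k S)"
proof (cases "amiss k S < x")
  case True
  have e: "x + k - amiss k S = (x - amiss k S - 1) + (k + 1)" using True assms by simp
  have "irank k S x = (x - amiss k S - 1) mod (k + 1)" unfolding irank_def by (simp only: e mod_add_self2)
  also have "\<dots> = x - amiss k S - 1" using assms by simp
  finally show ?thesis using True by simp
next
  case False
  then show ?thesis unfolding irank_def using assms by simp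
qed

lemma irank_inj:
  assumes "amiss k S \<le> k" "x \<le> k" "y \<le> k" "irank k S x = irank k S y"
  shows "x = y"
  using assms irank_eq[OF assms(1) assms(2)] irank_eq[OF assms(1) assms(3)]
  by (auto split: if_splits)

lemma irank_inj_on:
  assumes "amiss k S \<le> k" "A \<subseteq> {0..k}"
  shows "inj_on (irank k S) A"
  using irank_inj[OF assms(1)] assms(2) by (auto simp: inj_on_def subset_iff)

lemma irank_lt_k:
  assumes "amiss k S \<le> k" "x \<le> k" "x \<noteq> amiss k S"
  shows "irank k S x < k"
  using irank_eq[OF assms(1,2)] assms by auto

lemma isuc_le: "isuc k x \<le> k"
  unfolding isuc_def by simp

lemma irank_isuc:
  assumes "amiss k S \<le> k" "x \<le> k" "x \<noteq> amiss k S"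
  shows "irank k S (isuc k x) = irank k S x + 1"
proof (cases "x < k")
  case True
  then have "isuc k x = x + 1" unfolding isuc_def by simp
  then show ?thesis using irank_eq[OF assms(1,2)] irank_eq[OF assms(1), of "x+1"] True assms by auto
next
  case False
  then have xk: "x = k" using assms by simp
  then have "isuc k x = 0" unfolding isuc_def by simp
  then show ?thesis using irank_eq[OF assms(1,2)] irank_eq[OF assms(1), of 0] xk assms by auto
qed

lemma isuc_neq: "1 \<le> k \<Longrightarrow> isuc k x \<noteq> x"
proof -
  assume k: "1 \<le> k"
  consider "x < k" | "x = k" | "x > k" by linarith
  then show ?thesis
  proof cases
    case 1 then show ?thesis unfolding isuc_def by simp
  next
    case 2 then show ?thesis unfolding isuc_def using k by simp
  next
    case 3
    have "(x + 1) mod (k + 1) < k + 1" by simp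
    then show ?thesis unfolding isuc_def using 3 by linarith
  qed
qed

section \<open>sorted lists\<close>

definition incS :: "nat \<Rightarrow> nat set \<Rightarrow> nat set \<Rightarrow> nat list" where
  "incS k S A = sort_key (irank k S) (sorted_list_of_set A)"
definition decS :: "nat \<Rightarrow> nat set \<Rightarrow> nat set \<Rightarrow> nat list" where
  "decS k S A = rev (incS k S A)"

lemma incS_props:
  assumes "amiss k S \<le> k" "A \<subseteq> {0..k}"
  shows "set (incS k S A) = A" "distinct (incS k S A)" "length (incS k S A) = card A"
    "sorted_wrt (\<lambda>x y. irank k S x < irank k S y) (incS k S A)"
proof -
  have fin: "finite A" using assms(2) finite_subset by blast
  show s: "set (incS k S A) = A" unfolding incS_def using fin by simp
  show d: "distinct (incS k S A)" unfolding incS_def using fin by (simp add: distinct_sort)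
  show "length (incS k S A) = card A" unfolding incS_def using fin by simp
  have inj: "inj_on (irank k S) (set (incS k S A))" using s irank_inj_on[OF assms] by simp
  have "sorted (map (irank k S) (incS k S A))" unfolding incS_def by (rule sorted_sort_key)
  moreover have "distinct (map (irank k S) (incS k S A))" using d inj by (simp add: distinct_map)
  ultimately have "sorted_wrt (<) (map (irank k S) (incS k S A))" by (simp add: strict_sorted_iff)
  then show "sorted_wrt (\<lambda>x y. irank k S x < irank k S y) (incS k S A)" by (simp add: sorted_wrt_map)
qed

lemma decS_props:
  assumes "amiss k S \<le> k" "A \<subseteq> {0..k}"
  shows "set (decS k S A) = A" "distinct (decS k S A)" "length (decS k S A) = card A"
    "sorted_wrt (\<lambda>x y. irank k S y < irank k S x) (decS k S A)"
  using incS_props[OF assms] unfolding decS_def by (auto simp: sorted_wrt_rev)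

lemma sorted_f_unique:
  fixes f :: "nat \<Rightarrow> nat"
  assumes "sorted_wrt (\<lambda>x y. f x < f y) xs" "sorted_wrt (\<lambda>x y. f x < f y) ys" "set xs = set ys"
  shows "xs = ys"
proof -
  have a: "sorted_wrt (<) (map f xs)" "sorted_wrt (<) (map f ys)" using assms by (simp_all add: sorted_wrt_map)
  then have "distinct (map f xs)" "distinct (map f ys)" by (simp_all add: strict_sorted_iff)
  then have "inj_on f (set xs \<union> set ys)" using assms(3) by (simp add: distinct_map)
  then show ?thesis using map_sorted_distinct_set_unique[of f xs ys] a assms(3)
    by (simp add: strict_sorted_iff)
qed

lemma sorted_f_unique_dec:
  fixes f :: "nat \<Rightarrow> nat"
  assumes "sorted_wrt (\<lambda>x y. f y < f x) xs" "sorted_wrt (\<lambda>x y. f y < f x) ys" "set xs = set ys"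
  shows "xs = ys"
proof -
  have "rev xs = rev ys" using sorted_f_unique[of f "rev xs" "rev ys"] assms by (simp add: sorted_wrt_rev)
  then show ?thesis by simp
qed

lemma split_filter_dec:
  fixes f :: "nat \<Rightarrow> nat"
  assumes "sorted_wrt (\<lambda>x y. f y < f x) D" "\<forall>y\<in>set D. f y \<noteq> t"
  shows "D = filter (\<lambda>y. t < f y) D @ filter (\<lambda>y. f y < t) D"
  using assms
proof (induction D)
  case Nil then show ?case by simp
next
  case (Cons x D)
  show ?case
  proof (cases "t < f x")
    case True then show ?thesis using Cons by auto
  next
    case False
    then have "\<forall>y\<in>set D. f y < t" using Cons.prems by force
    then show ?thesis using False Cons.prems by (fastforce simp: filter_id_conv filter_empty_conv)
  qed
qed

lemma split_filter_inc:
  fixes f :: "nat \<Rightarrow> nat"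
  assumes "sorted_wrt (\<lambda>x y. f x < f y) D" "\<forall>y\<in>set D. f y \<noteq> t"
  shows "D = filter (\<lambda>y. f y < t) D @ filter (\<lambda>y. t < f y) D"
  using assms
proof (induction D)
  case Nil then show ?case by simp
next
  case (Cons x D)
  show ?case
  proof (cases "f x < t")
    case True then show ?thesis using Cons by auto
  next
    case False
    then have "\<forall>y\<in>set D. t < f y" using Cons.prems by force
    then show ?thesis using False Cons.prems by (fastforce simp: filter_id_conv filter_empty_conv)
  qed
qed

section \<open>valid orders\<close>

fun vo :: "nat \<Rightarrow> nat list \<Rightarrow> bool" where
  "vo k [] = True"
| "vo k (x # xs) = (isuc k x \<notin> set xs \<and> vo k xs)"

lemma valid_nth_vo:
  "(\<forall>x y. x < length w \<and> y < length w \<and> w ! y = isuc k (w ! x) \<longrightarrow> y < x) \<Longrightarrow> vo k w"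
proof (induction w)
  case Nil then show ?case by simp
next
  case (Cons a w)
  have 1: "isuc k a \<notin> set w"
  proof
    assume "isuc k a \<in> set w"
    then obtain y where "y < length w" "w ! y = isuc k a" by (auto simp: in_set_conv_nth)
    then show False using Cons.prems[rule_format, of 0 "Suc y"] by simp
  qed
  have "\<forall>x y. x < length w \<and> y < length w \<and> w ! y = isuc k (w ! x) \<longrightarrow> y < x"
  proof (intro allI impI)
    fix x y assume "x < length w \<and> y < length w \<and> w ! y = isuc k (w ! x)"
    then show "y < x" using Cons.prems[rule_format, of "Suc x" "Suc y"] by simp
  qed
  then show ?case using 1 Cons.IH by simp
qed

lemma vo_valid_nth:
  assumes "1 \<le> k" "vo k w"
  shows "\<forall>x y. x < length w \<and> y < length w \<and> w ! y = isuc k (w ! x) \<longrightarrow> y < x"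
  using assms(2)
proof (induction w)
  case Nil then show ?case by simp
next
  case (Cons a w)
  show ?case
  proof (intro allI impI)
    fix x y assume h: "x < length (a # w) \<and> y < length (a # w) \<and> (a # w) ! y = isuc k ((a # w) ! x)"
    show "y < x"
    proof (cases x)
      case 0
      then show ?thesis
      proof (cases y)
        case 0 then show ?thesis using h \<open>x = 0\<close> isuc_neq[OF assms(1)] by (metis nth_Cons_0)
      next
        case (Suc y')
        then have "w ! y' = isuc k a" "y' < length w" using h \<open>x = 0\<close> by auto
        then show ?thesis using Cons.prems by (auto simp: in_set_conv_nth)
      qed
    next
      case (Suc x')
      show ?thesis
      proof (cases y)
        case 0 then show ?thesis using Suc by simp
      next
        case (Suc y')
        then show ?thesis using h \<open>x = Suc x'\<close> Cons by auto
      qed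
    qed
  qed
qed

lemma dec_vo:
  assumes "amiss k S \<le> k" "S \<subseteq> {0..k}" "amiss k S \<notin> S" "set w \<subseteq> S"
    "sorted_wrt (\<lambda>x y. irank k S y < irank k S x) w"
  shows "vo k w"
  using assms(4,5)
proof (induction w)
  case Nil then show ?case by simp
next
  case (Cons a w)
  have a: "a \<le> k" "a \<noteq> amiss k S" using Cons.prems assms by auto
  have "isuc k a \<notin> set w"
  proof
    assume "isuc k a \<in> set w"
    then have "irank k S (isuc k a) < irank k S a" using Cons.prems by auto
    then show False using irank_isuc[OF assms(1) a] by simp
  qed
  then show ?case using Cons by simp
qed

lemma vo_weq_dec:
  assumes "amiss k S \<le> k" "S \<subseteq> {0..k}" "amiss k S \<notin> S"
  shows "vo k w \<Longrightarrow> distinct w \<Longrightarrow> set w \<subseteq> S \<Longrightarrow> weq k w (decS k S (set w))"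
proof (induction w)
  case Nil
  have "decS k S {} = []" unfolding decS_def incS_def by simp
  then show ?case by (simp add: weq.refl)
next
  case (Cons x xs)
  let ?f = "irank k S"
  have xk: "x \<le> k" "x \<noteq> amiss k S" using Cons.prems assms by auto
  have Sk: "set xs \<subseteq> {0..k}" using Cons.prems assms by auto
  define D where "D = decS k S (set xs)"
  have IH: "weq k xs D" using Cons unfolding D_def by simp
  have Dp: "set D = set xs" "sorted_wrt (\<lambda>x y. ?f y < ?f x) D" unfolding D_def
    using decS_props[OF assms(1) Sk] by auto
  define G where "G = filter (\<lambda>y. ?f x < ?f y) D"
  define L where "L = filter (\<lambda>y. ?f y < ?f x) D"
  have ne: "\<forall>y\<in>set D. ?f y \<noteq> ?f x"
  proof
    fix y assume "y \<in> set D"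
    then have "y \<in> set xs" "y \<le> k" using Dp Sk by auto
    then show "?f y \<noteq> ?f x" using irank_inj[OF assms(1) \<open>y \<le> k\<close> xk(1)] Cons.prems by auto
  qed
  have DGL: "D = G @ L" unfolding G_def L_def by (rule split_filter_dec[OF Dp(2) ne])
  have sG: "sorted_wrt (\<lambda>x y. ?f y < ?f x) G" unfolding G_def by (rule sorted_wrt_filter[OF Dp(2)])
  have sL: "sorted_wrt (\<lambda>x y. ?f y < ?f x) L" unfolding L_def by (rule sorted_wrt_filter[OF Dp(2)])
  have gx: "\<forall>g\<in>set G. ?f x < ?f g" unfolding G_def by simp
  have lx: "\<forall>l\<in>set L. ?f l < ?f x" unfolding L_def by simp
  have srt: "sorted_wrt (\<lambda>x y. ?f y < ?f x) (G @ x # L)"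
    unfolding sorted_wrt_append using sG sL gx lx by (auto dest: less_trans)
  have setGL: "set (G @ x # L) = set (x # xs)" using DGL Dp(1) by auto
  have xSk: "set (x # xs) \<subseteq> {0..k}" using Cons.prems assms by auto
  have dS: "decS k S (set (x # xs)) = G @ x # L"
    using sorted_f_unique_dec[OF decS_props(4)[OF assms(1) xSk] srt] decS_props(1)[OF assms(1) xSk] setGL
    by simp
  have 1: "weq k (x # xs) (x # G @ L)" using weq_ctx[OF IH, of "[x]" "[]"] DGL xk by simp
  have c: "weq k (x # G) (G @ [x])"
  proof (rule weq_commute[OF xk(1)])
    fix y assume y: "y \<in> set G"
    then have yx: "y \<in> set xs" "y \<le> k" "?f x < ?f y" using Dp Sk unfolding G_def by auto
    have "y \<noteq> amiss k S" using yx Cons.prems assms by auto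
    then have "?f (isuc k y) = ?f y + 1" using irank_isuc[OF assms(1) yx(2)] by simp
    then have "isuc k y \<noteq> x" using yx by auto
    moreover have "isuc k x \<noteq> y" using Cons.prems yx by auto
    ultimately show "y \<le> k \<and> isuc k x \<noteq> y \<and> isuc k y \<noteq> x" using yx by simp
  qed
  have Lk: "set L \<subseteq> {0..k}" using Dp Sk unfolding L_def by auto
  have 2: "weq k (x # G @ L) (G @ x # L)" using weq_ctx[OF c, of "[]" L] Lk by simp
  show ?case using weq_trans[OF 2 1] dS by simp
qed



definition Dk :: "nat \<Rightarrow> nat list \<Rightarrow> nat \<Rightarrow> bool" where
  "Dk k w a \<longleftrightarrow> sorted_wrt (\<lambda>x y. irank k (set w) y < irank k (set w) x) (take a w) \<and>
                 sorted_wrt (\<lambda>x y. irank k (set w) x < irank k (set w) y) (drop a w)"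

definition Wf :: "nat \<Rightarrow> nat \<Rightarrow> nat \<Rightarrow> falg" where
  "Wf k r a = (\<lambda>w. if length w = r \<and> set w \<subseteq> {0..k} \<and> Dk k w a then 1 else 0)"

definition wrd :: "nat \<Rightarrow> nat set \<Rightarrow> nat set \<Rightarrow> nat list" where
  "wrd k A B = decS k (A \<union> B) A @ incS k (A \<union> B) B"

lemma inc_distinct: "sorted_wrt (\<lambda>x y. (f::nat\<Rightarrow>nat) x < f y) xs \<Longrightarrow> distinct xs"
proof -
  assume "sorted_wrt (\<lambda>x y. f x < f y) xs"
  then have "sorted_wrt (<) (map f xs)" by (simp add: sorted_wrt_map)
  then have "distinct (map f xs)" by (simp add: strict_sorted_iff)
  then show "distinct xs" by (simp add: distinct_map)
qed

lemma dec_distinct: "sorted_wrt (\<lambda>x y. (f::nat\<Rightarrow>nat) y < f x) xs \<Longrightarrow> distinct xs"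
  using inc_distinct[of f "rev xs"] by (simp add: sorted_wrt_rev)

lemma card_proper:
  assumes "S \<subseteq> {0..k}" "card S \<le> k"
  shows "S \<noteq> {0..k}"
  using assms by auto

lemma dword_valid:
  assumes "A \<subseteq> {0..k}" "A \<noteq> {0..k}" "1 \<le> k"
  shows "valid_order k A (dword k A)"
proof -
  note am = amiss_props[OF assms(1,2)]
  let ?w = "decS k A A"
  have v: "vo k ?w" using dec_vo[OF am(1) assms(1) am(2)] decS_props[OF am(1) assms(1)] by simp
  have "valid_order k A ?w"
    unfolding valid_order_def
    using decS_props[OF am(1) assms(1)] vo_valid_nth[OF assms(3) v]
    by auto
  then show ?thesis unfolding dword_def by (rule someI)
qed

lemma weq_dword:
  assumes "A \<subseteq> S" "S \<subseteq> {0..k}" "S \<noteq> {0..k}" "1 \<le> k"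
  shows "weq k (dword k A) (decS k S A)"
proof -
  have A: "A \<subseteq> {0..k}" "A \<noteq> {0..k}" using assms by auto
  have v: "valid_order k A (dword k A)" by (rule dword_valid[OF A assms(4)])
  note am = amiss_props[OF assms(2,3)]
  have "weq k (dword k A) (decS k S (set (dword k A)))"
    using v unfolding valid_order_def
    by (intro vo_weq_dec[OF am(1) assms(2) am(2)] valid_nth_vo) (use assms in auto)
  then show ?thesis using v unfolding valid_order_def by simp
qed

lemma weq_word:
  assumes "A \<subseteq> {0..k}" "B \<subseteq> {0..k}" "A \<union> B \<noteq> {0..k}" "1 \<le> k"
  shows "weq k (dword k A @ rev (dword k B)) (wrd k A B)"
proof -
  let ?S = "A \<union> B"
  have S: "?S \<subseteq> {0..k}" using assms by auto
  note am = amiss_props[OF S assms(3)]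
  have 1: "weq k (dword k A) (decS k ?S A)" by (rule weq_dword) (use assms in auto)
  have 2: "weq k (dword k B) (decS k ?S B)" by (rule weq_dword) (use assms in auto)
  have 3: "weq k (rev (dword k B)) (incS k ?S B)" using weq_rev[OF 2] unfolding decS_def by simp
  have "set (dword k B) = B" using dword_valid[of B k] assms unfolding valid_order_def by auto
  then show ?thesis unfolding wrd_def
    by (intro weq_app[OF 1 3]) (use decS_props(1)[OF am(1) assms(1)] assms in auto)
qed

lemma wrd_props:
  assumes "A \<subseteq> {0..k}" "card A = a" "B \<subseteq> {0..k}" "card B = b" "a + b \<le> k"
  shows "length (wrd k A B) = a + b" "set (wrd k A B) = A \<union> B" "set (wrd k A B) \<subseteq> {0..k}"
    "Dk k (wrd k A B) a" "set (take a (wrd k A B)) = A" "set (drop a (wrd k A B)) = B"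
proof -
  let ?S = "A \<union> B"
  have S: "?S \<subseteq> {0..k}" using assms by auto
  have fin: "finite A" "finite B" using assms finite_subset by blast+
  have "card ?S \<le> k" using card_Un_le[of A B] assms by simp
  then have Sp: "?S \<noteq> {0..k}" using card_proper[OF S] by simp
  note am = amiss_props[OF S Sp]
  note dA = decS_props[OF am(1) assms(1)]
  note iB = incS_props[OF am(1) assms(3)]
  show "length (wrd k A B) = a + b" unfolding wrd_def using dA iB assms by simp
  show st: "set (wrd k A B) = A \<union> B" unfolding wrd_def using dA iB by simp
  then show "set (wrd k A B) \<subseteq> {0..k}" using S by simp
  have t: "take a (wrd k A B) = decS k ?S A" unfolding wrd_def using dA assms by simp
  have d: "drop a (wrd k A B) = incS k ?S B" unfolding wrd_def using dA assms by simp
  show "Dk k (wrd k A B) a" unfolding Dk_def st t d using dA iB by simp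
  show "set (take a (wrd k A B)) = A" using t dA by simp
  show "set (drop a (wrd k A B)) = B" using d iB by simp
qed

lemma wrd_inv:
  assumes "length w = a + b" "set w \<subseteq> {0..k}" "Dk k w a" "a + b \<le> k"
  shows "set (take a w) \<subseteq> {0..k}" "card (set (take a w)) = a"
    "set (drop a w) \<subseteq> {0..k}" "card (set (drop a w)) = b"
    "wrd k (set (take a w)) (set (drop a w)) = w"
proof -
  let ?S = "set w"
  have "card ?S \<le> k" using card_length[of w] assms by simp
  then have Sp: "?S \<noteq> {0..k}" using card_proper[OF assms(2)] by simp
  note am = amiss_props[OF assms(2) Sp]
  have s1: "sorted_wrt (\<lambda>x y. irank k ?S y < irank k ?S x) (take a w)"
    and s2: "sorted_wrt (\<lambda>x y. irank k ?S x < irank k ?S y) (drop a w)"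
    using assms(3) unfolding Dk_def by auto
  have dt: "distinct (take a w)" by (rule dec_distinct[OF s1])
  have dd: "distinct (drop a w)" by (rule inc_distinct[OF s2])
  show "set (take a w) \<subseteq> {0..k}" "set (drop a w) \<subseteq> {0..k}" using assms(2)
    by (meson order_trans set_take_subset set_drop_subset)+
  then have tk: "set (take a w) \<subseteq> {0..k}" "set (drop a w) \<subseteq> {0..k}" by auto
  show "card (set (take a w)) = a" using distinct_card[OF dt] assms by simp
  show "card (set (drop a w)) = b" using distinct_card[OF dd] assms by simp
  have un: "set (take a w) \<union> set (drop a w) = ?S"
    by (metis append_take_drop_id set_append)
  have "decS k ?S (set (take a w)) = take a w"
    using sorted_f_unique_dec[OF decS_props(4)[OF am(1) tk(1)] s1] decS_props(1)[OF am(1) tk(1)] by simp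
  moreover have "incS k ?S (set (drop a w)) = drop a w"
    using sorted_f_unique[OF incS_props(4)[OF am(1) tk(2)] s2] incS_props(1)[OF am(1) tk(2)] by simp
  ultimately show "wrd k (set (take a w)) (set (drop a w)) = w" unfolding wrd_def un by simp
qed

lemma sum_wrd:
  assumes "a + b \<le> k"
  shows "(\<Sum>A\<in>{A. A \<subseteq> {0..k} \<and> card A = a}. \<Sum>B\<in>{B. B \<subseteq> {0..k} \<and> card B = b}. wd (wrd k A B))
         = Wf k (a + b) a"
proof
  fix w
  let ?SA = "{A. A \<subseteq> {0..k} \<and> card A = a}" and ?SB = "{B. B \<subseteq> {0..k} \<and> card B = b}"
  have finA: "finite ?SA" "finite ?SB" by (auto intro: finite_subset[of _ "Pow {0..k}"])
  have lhs: "(\<Sum>A\<in>?SA. \<Sum>B\<in>?SB. wd (wrd k A B)) w = (\<Sum>A\<in>?SA. \<Sum>B\<in>?SB. if wrd k A B = w then 1 else 0)"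
    by (simp add: sum_apply_fun wd_def eq_commute)
  show "(\<Sum>A\<in>?SA. \<Sum>B\<in>?SB. wd (wrd k A B)) w = Wf k (a + b) a w"
  proof (cases "length w = a + b \<and> set w \<subseteq> {0..k} \<and> Dk k w a")
    case True
    let ?A0 = "set (take a w)" and ?B0 = "set (drop a w)"
    note inv = wrd_inv[of w a b k] True assms
    have eq: "(wrd k A B = w) = (A = ?A0 \<and> B = ?B0)" if AB: "A \<in> ?SA" "B \<in> ?SB" for A B
    proof
      assume "wrd k A B = w"
      then show "A = ?A0 \<and> B = ?B0" using wrd_props(5,6)[of A k a B b] AB assms by auto
    next
      assume "A = ?A0 \<and> B = ?B0"
      then show "wrd k A B = w" using wrd_inv(5)[of w a b k] True assms by simp
    qed
    have A0: "?A0 \<in> ?SA" "?B0 \<in> ?SB" using wrd_inv(1-4)[of w a b k] True assms by auto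
    have "(\<Sum>A\<in>?SA. \<Sum>B\<in>?SB. if wrd k A B = w then 1 else 0) =
          (\<Sum>A\<in>?SA. if A = ?A0 then (\<Sum>B\<in>?SB. if B = ?B0 then 1 else 0) else (0::int))"
      using eq by (intro sum.cong) auto
    also have "\<dots> = 1" using finA A0 by (simp add: sum.delta)
    finally show ?thesis using lhs True unfolding Wf_def by simp
  next
    case False
    have "(\<Sum>A\<in>?SA. \<Sum>B\<in>?SB. if wrd k A B = w then 1 else (0::int)) = 0"
    proof (intro sum.neutral ballI)
      fix A B assume AB: "A \<in> ?SA" "B \<in> ?SB"
      have "wrd k A B \<noteq> w"
      proof
        assume e: "wrd k A B = w"
        have "length w = a + b \<and> set w \<subseteq> {0..k} \<and> Dk k w a"
          using wrd_props(1,3,4)[of A k a B b] AB assms unfolding e by auto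
        then show False using False by simp
      qed
      then show "(if wrd k A B = w then 1 else (0::int)) = 0" by simp
    qed
    then show ?thesis using lhs False unfolding Wf_def by simp
  qed
qed

lemma W_lemma:
  assumes "a \<le> r" "r \<le> k" "1 \<le> k"
  shows "amul (h_el k a) (e_el k (r - a)) - Wf k r a \<in> rel_ideal k"
proof -
  let ?SA = "{A. A \<subseteq> {0..k} \<and> card A = a}" and ?SB = "{B. B \<subseteq> {0..k} \<and> card B = r - a}"
  have "amul (h_el k a) (e_el k (r - a)) = (\<Sum>A\<in>?SA. \<Sum>B\<in>?SB. wd (dword k A @ rev (dword k B)))"
    unfolding h_el_def e_el_def d_el_def i_el_def amul_sum_left amul_sum_right amul_wd by (rule sum.swap)
  moreover have "Wf k r a = (\<Sum>A\<in>?SA. \<Sum>B\<in>?SB. wd (wrd k A B))"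
    using sum_wrd[of a "r - a" k] assms by simp
  ultimately have "amul (h_el k a) (e_el k (r - a)) - Wf k r a =
     (\<Sum>A\<in>?SA. \<Sum>B\<in>?SB. wd (dword k A @ rev (dword k B)) - wd (wrd k A B))"
    by (simp add: sum_subtractf)
  also have "\<dots> \<in> rel_ideal k"
  proof (intro I_sum weq_I weq_word)
    fix A B assume A: "A \<in> ?SA" and B: "B \<in> ?SB"
    show "A \<subseteq> {0..k}" "B \<subseteq> {0..k}" "1 \<le> k" using A B assms by auto
    have fin: "finite A" "finite B" using A B finite_subset by auto
    have "card (A \<union> B) \<le> k" using card_Un_le[of A B] A B assms by simp
    then show "A \<union> B \<noteq> {0..k}" using card_proper[of "A \<union> B" k] A B by auto
  qed
  finally show ?thesis .
qed



lemma sum_tri: "(\<Sum>i<n. \<Sum>m\<le>i. F m) = (\<Sum>m<n. int (n - m) * (F m :: int))"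
proof (induction n)
  case 0 then show ?case by simp
next
  case (Suc n)
  have "(\<Sum>m<Suc n. int (Suc n - m) * F m) = (\<Sum>m<Suc n. int (n - m) * F m + F m)"
    by (intro sum.cong) (auto simp: algebra_simps of_nat_diff Suc_diff_le)
  also have "\<dots> = (\<Sum>m<Suc n. int (n - m) * F m) + (\<Sum>m\<le>n. F m)"
    by (simp add: sum.distrib lessThan_Suc_atMost)
  also have "(\<Sum>m<Suc n. int (n - m) * F m) = (\<Sum>m<n. int (n - m) * F m)"
    by (simp only: sum.lessThan_Suc) simp
  finally show ?case using Suc by (simp only: sum.lessThan_Suc)
qed

lemma sign_lemma: "m \<le> i \<Longrightarrow> (-1::int) ^ i * (-1) ^ (i - m) = (-1) ^ m"
proof -
  assume mi: "m \<le> i"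
  have "(-1::int) ^ i * (-1) ^ (i - m) = (-1) ^ (i + (i - m))" by (simp add: power_add)
  also have "i + (i - m) = m + 2 * (i - m)" using mi by simp
  also have "(-1::int) ^ (m + 2 * (i - m)) = (-1) ^ m" by (simp add: power_add power_mult)
  finally show ?thesis .
qed

lemma sum_ident:
  fixes g :: "nat \<Rightarrow> int"
  shows "(\<Sum>i<r. (-1) ^ i * (\<Sum>j\<le>i. (-1) ^ j * g (r - i + j))) = (\<Sum>a\<le>r. (-1) ^ (r - a) * int a * g a)"
proof -
  have inner: "(-1) ^ i * (\<Sum>j\<le>i. (-1) ^ j * g (r - i + j)) = (\<Sum>m\<le>i. (-1) ^ m * g (r - m))"
    if "i < r" for i
  proof -
    have "(\<Sum>j\<le>i. (-1) ^ j * g (r - i + j)) = (\<Sum>m\<le>i. (-1) ^ (i - m) * g (r - i + (i - m)))"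
      using sum.atLeastAtMost_rev[of "\<lambda>j. (-1) ^ j * g (r - i + j)" 0 i] by (simp add: atLeast0AtMost)
    also have "\<dots> = (\<Sum>m\<le>i. (-1) ^ (i - m) * g (r - m))"
      using that by (intro sum.cong) auto
    finally have "(-1) ^ i * (\<Sum>j\<le>i. (-1) ^ j * g (r - i + j)) = (\<Sum>m\<le>i. (-1) ^ i * ((-1) ^ (i - m) * g (r - m)))"
      by (simp add: sum_distrib_left)
    also have "\<dots> = (\<Sum>m\<le>i. (-1) ^ m * g (r - m))"
      by (intro sum.cong) (auto simp: mult.assoc[symmetric] sign_lemma)
    finally show ?thesis .
  qed
  have "(\<Sum>i<r. (-1) ^ i * (\<Sum>j\<le>i. (-1) ^ j * g (r - i + j))) = (\<Sum>i<r. \<Sum>m\<le>i. (-1) ^ m * g (r - m))"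
    using inner by (intro sum.cong) auto
  also have "\<dots> = (\<Sum>m<r. int (r - m) * ((-1) ^ m * g (r - m)))" by (rule sum_tri)
  also have "\<dots> = (\<Sum>m\<le>r. int (r - m) * ((-1) ^ m * g (r - m)))"
    by (simp add: lessThan_Suc_atMost[symmetric])
  also have "\<dots> = (\<Sum>a\<le>r. int (r - (r - a)) * ((-1) ^ (r - a) * g (r - (r - a))))"
    using sum.atLeastAtMost_rev[of "\<lambda>m. int (r - m) * ((-1) ^ m * g (r - m))" 0 r]
    by (simp add: atLeast0AtMost)
  also have "\<dots> = (\<Sum>a\<le>r. (-1) ^ (r - a) * int a * g a)"
    by (intro sum.cong) auto
  finally show ?thesis .
qed

definition Zs :: "nat \<Rightarrow> nat list \<Rightarrow> nat set" where
  "Zs k w = {a. a \<le> length w \<and> Dk k w a}"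

definition Lf :: "nat \<Rightarrow> nat \<Rightarrow> falg" where
  "Lf k r = (\<lambda>w. if length w = r \<and> set w \<subseteq> {0..k} then (\<Sum>a\<in>Zs k w. (-1) ^ (r - a) * int a) else 0)"

lemma p_el_Lf:
  assumes "1 \<le> r" "r \<le> k"
  shows "p_el k r - Lf k r \<in> rel_ideal k"
proof -
  define P' where "P' = (\<Sum>i<r. smul ((-1) ^ i) (\<Sum>j\<le>i. smul ((-1) ^ j) (Wf k r (r - i + j))))"
  have t: "smul ((-1) ^ i) (hook_s k r i) - smul ((-1) ^ i) (\<Sum>j\<le>i. smul ((-1) ^ j) (Wf k r (r - i + j)))
     = smul ((-1) ^ i) (\<Sum>j\<le>i. smul ((-1) ^ j)
           (amul (h_el k (r - i + j)) (e_el k (i - j)) - Wf k r (r - i + j)))" for i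
    unfolding hook_s_def by (simp only: smul_diff sum_subtractf)
  have "p_el k r - P' = (\<Sum>i<r. smul ((-1) ^ i) (hook_s k r i) - smul ((-1) ^ i) (\<Sum>j\<le>i. smul ((-1) ^ j) (Wf k r (r - i + j))))"
    unfolding p_el_def P'_def by (rule sum_subtractf[symmetric])
  also have "\<dots> = (\<Sum>i<r. smul ((-1) ^ i) (\<Sum>j\<le>i. smul ((-1) ^ j)
           (amul (h_el k (r - i + j)) (e_el k (i - j)) - Wf k r (r - i + j))))"
    by (rule sum.cong[OF HOL.refl]) (rule t)
  also have "\<dots> \<in> rel_ideal k"
  proof (intro I_sum I_smul)
    fix i j assume i: "i \<in> {..<r}" and j: "j \<in> {..i}"
    have e: "i - j = r - (r - i + j)" using i j by auto
    have "amul (h_el k (r - i + j)) (e_el k (r - (r - i + j))) - Wf k r (r - i + j) \<in> rel_ideal k"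
      using i j assms by (intro W_lemma) auto
    then show "amul (h_el k (r - i + j)) (e_el k (i - j)) - Wf k r (r - i + j) \<in> rel_ideal k"
      by (simp only: e)
  qed
  finally have 1: "p_el k r - P' \<in> rel_ideal k" .
  have "P' = Lf k r"
  proof
    fix w
    have Pw: "P' w = (\<Sum>i<r. (-1) ^ i * (\<Sum>j\<le>i. (-1) ^ j * Wf k r (r - i + j) w))"
      by (simp add: P'_def sum_apply_fun smul_def)
    show "P' w = Lf k r w"
    proof (cases "length w = r \<and> set w \<subseteq> {0..k}")
      case True
      let ?g = "\<lambda>a. if Dk k w a then 1 else (0::int)"
      have "Wf k r a w = ?g a" for a unfolding Wf_def using True by simp
      then have "P' w = (\<Sum>i<r. (-1) ^ i * (\<Sum>j\<le>i. (-1) ^ j * ?g (r - i + j)))"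
        unfolding Pw by simp
      also have "\<dots> = (\<Sum>a\<le>r. (-1) ^ (r - a) * int a * ?g a)" by (rule sum_ident)
      also have "\<dots> = (\<Sum>a\<in>{..r}. if Dk k w a then (-1) ^ (r - a) * int a else 0)"
        by (intro sum.cong) auto
      also have "\<dots> = (\<Sum>a\<in>{a\<in>{..r}. Dk k w a}. (-1) ^ (r - a) * int a)"
        by (rule sum.inter_filter[symmetric]) simp
      also have "{a\<in>{..r}. Dk k w a} = Zs k w" unfolding Zs_def using True by auto
      finally show ?thesis unfolding Lf_def using True by simp
    next
      case False
      have "Wf k r a w = 0" for a unfolding Wf_def using False by auto
      then have "P' w = 0" unfolding Pw by simp
      moreover have "Lf k r w = 0" unfolding Lf_def using False by auto
      ultimately show ?thesis by simp
    qed
  qed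
  then show ?thesis using 1 by simp
qed



definition DA :: "(nat \<Rightarrow> nat) \<Rightarrow> nat \<Rightarrow> nat \<Rightarrow> bool" where
  "DA g n a \<longleftrightarrow> (\<forall>t. t + 1 < a \<longrightarrow> g (t + 1) < g t) \<and> (\<forall>t. a \<le> t \<and> t + 1 < n \<longrightarrow> g t < g (t + 1))"

lemma DA_A1:
  assumes "DA g n a" "DA g n b" "a < b" "b \<le> n"
  shows "b = a + 1"
proof (rule ccontr)
  assume "b \<noteq> a + 1"
  then have "a + 1 < b" using assms by simp
  then have "g (a + 1) < g a" "g a < g (a + 1)" using assms unfolding DA_def by auto
  then show False by simp
qed

lemma DA_hook:
  assumes "DA g n a" "a \<le> n" "1 \<le> n"
  shows "(\<exists>j. 1 \<le> j \<and> j \<le> n \<and> DA g n (j - 1) \<and> DA g n j) \<or>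
         (\<exists>j. 1 \<le> j \<and> j < n \<and> DA g n j \<and> g (j - 1) = g j)"
proof -
  consider "a = 0" | "a = n" | "0 < a \<and> a < n \<and> g (a - 1) < g a" | "0 < a \<and> a < n \<and> g a < g (a - 1)"
    | "0 < a \<and> a < n \<and> g (a - 1) = g a"
    using assms by linarith
  then show ?thesis
  proof cases
    case 1
    have "DA g n 1" using assms 1 unfolding DA_def by auto
    then show ?thesis using assms 1 by auto
  next
    case 2
    have "DA g n (n - 1)" using assms 2 unfolding DA_def by auto
    then show ?thesis using assms 2 by (intro disjI1 exI[of _ n]) auto
  next
    case 3
    have "DA g n (a - 1)" unfolding DA_def
    proof (intro conjI allI impI)
      fix t assume "t + 1 < a - 1" then show "g (t + 1) < g t" using assms(1) unfolding DA_def by auto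
    next
      fix t assume t: "a - 1 \<le> t \<and> t + 1 < n"
      show "g t < g (t + 1)"
      proof (cases "t = a - 1")
        case True then show ?thesis using 3 by simp
      next
        case False then show ?thesis using t assms(1) unfolding DA_def by auto
      qed
    qed
    then show ?thesis using assms 3 by (intro disjI1 exI[of _ a]) auto
  next
    case 4
    have "DA g n (a + 1)" unfolding DA_def
    proof (intro conjI allI impI)
      fix t assume t: "t + 1 < a + 1"
      show "g (t + 1) < g t"
      proof (cases "t = a - 1")
        case True then show ?thesis using 4 by simp
      next
        case False then show ?thesis using t assms(1) unfolding DA_def by auto
      qed
    next
      fix t assume t: "a + 1 \<le> t \<and> t + 1 < n"
      then show "g t < g (t + 1)" using assms(1) unfolding DA_def by auto
    qed
    then show ?thesis using assms 4 by (intro disjI1 exI[of _ "a + 1"]) auto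
  next
    case 5
    then show ?thesis using assms by (intro disjI2 exI[of _ a]) auto
  qed
qed

lemma DA_V_Z:
  assumes "1 \<le> j" "j \<le> n" "DA g n (j - 1)" "DA g n j"
  shows "{a. a \<le> n \<and> DA g n a} = {j - 1, j}"
proof
  show "{j - 1, j} \<subseteq> {a. a \<le> n \<and> DA g n a}" using assms by auto
  show "{a. a \<le> n \<and> DA g n a} \<subseteq> {j - 1, j}"
  proof
    fix a assume a: "a \<in> {a. a \<le> n \<and> DA g n a}"
    show "a \<in> {j - 1, j}"
    proof (cases "a < j - 1")
      case True
      then have "j = a + 1" using DA_A1[of g n a j] a assms by auto
      then show ?thesis using True by simp
    next
      case False
      show ?thesis
      proof (cases "a \<le> j")
        case True then show ?thesis using False by auto
      next
        case F2: False
        have "j - 1 < a" using F2 by simp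
        then have "a = j - 1 + 1" using DA_A1[of g n "j - 1" a] a assms by auto
        then show ?thesis using F2 assms by simp
      qed
    qed
  qed
qed

lemma DA_U_Z:
  assumes "1 \<le> j" "j < n" "DA g n j" "g (j - 1) = g j"
  shows "{a. a \<le> n \<and> DA g n a} = {j}"
proof
  show "{j} \<subseteq> {a. a \<le> n \<and> DA g n a}" using assms by auto
  show "{a. a \<le> n \<and> DA g n a} \<subseteq> {j}"
  proof
    fix a assume a: "a \<in> {a. a \<le> n \<and> DA g n a}"
    show "a \<in> {j}"
    proof (rule ccontr)
      assume "a \<notin> {j}"
      then consider "a < j" | "j < a" by force
      then show False
      proof cases
        case 1
        then have "j = a + 1" using DA_A1[of g n a j] a assms by auto
        then have "g (j - 1) < g j" using a assms unfolding DA_def by auto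
        then show False using assms by simp
      next
        case 2
        then have "a = j + 1" using DA_A1[of g n j a] a assms by auto
        then have d: "\<forall>t. t + 1 < j + 1 \<longrightarrow> g (t + 1) < g t" using a unfolding DA_def by auto
        have "j - 1 + 1 < j + 1" "j - 1 + 1 = j" using assms by auto
        then have "g j < g (j - 1)" using d by metis
        then show False using assms by simp
      qed
    qed
  qed
qed

lemma asc_V_set:
  assumes "1 \<le> j" "j \<le> n" "DA g n (j - 1)" "DA g n j"
  shows "{t. t + 1 < n \<and> g t < g (t + 1)} = {j - 1..<n - 1}"
proof (intro set_eqI iffI)
  fix t assume "t \<in> {t. t + 1 < n \<and> g t < g (t + 1)}"
  then have t: "t + 1 < n" "g t < g (t + 1)" by auto
  have "j - 1 \<le> t"
  proof (rule ccontr)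
    assume "\<not> j - 1 \<le> t"
    then have "t + 1 < j" by simp
    then have "g (t + 1) < g t" using assms(4) unfolding DA_def by auto
    then show False using t by simp
  qed
  then show "t \<in> {j - 1..<n - 1}" using t by auto
next
  fix t assume "t \<in> {j - 1..<n - 1}"
  then show "t \<in> {t. t + 1 < n \<and> g t < g (t + 1)}" using assms(3) unfolding DA_def by auto
qed

lemma asc_U_set:
  assumes "1 \<le> j" "j < n" "DA g n j" "g (j - 1) = g j"
  shows "{t. t + 1 < n \<and> g t < g (t + 1)} = {j..<n - 1}"
proof (intro set_eqI iffI)
  fix t assume "t \<in> {t. t + 1 < n \<and> g t < g (t + 1)}"
  then have t: "t + 1 < n" "g t < g (t + 1)" by auto
  have "j \<le> t"
  proof (rule ccontr)
    assume "\<not> j \<le> t"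
    then consider "t + 1 < j" | "t + 1 = j" by linarith
    then show False
    proof cases
      case 1
      then have "g (t + 1) < g t" using assms(3) unfolding DA_def by auto
      then show False using t by simp
    next
      case 2
      then have "t = j - 1" by simp
      then show False using t assms(4) 2 by simp
    qed
  qed
  then show "t \<in> {j..<n - 1}" using t by auto
next
  fix t assume "t \<in> {j..<n - 1}"
  then show "t \<in> {t. t + 1 < n \<and> g t < g (t + 1)}" using assms(3) unfolding DA_def by auto
qed



abbreviation gw :: "nat \<Rightarrow> nat list \<Rightarrow> nat \<Rightarrow> nat" where
  "gw k w \<equiv> (\<lambda>t. irank k (set w) (w ! t))"

lemma Dk_DA:
  assumes "a \<le> length w"
  shows "Dk k w a \<longleftrightarrow> DA (gw k w) (length w) a"
proof -
  let ?f = "irank k (set w)"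
  have tr1: "transp (\<lambda>x y. ?f y < ?f x)" by (auto simp: transp_def)
  have tr2: "transp (\<lambda>x y. ?f x < ?f y)" by (auto simp: transp_def)
  have 1: "sorted_wrt (\<lambda>x y. ?f y < ?f x) (take a w) \<longleftrightarrow> (\<forall>t. t + 1 < a \<longrightarrow> gw k w (t + 1) < gw k w t)"
    unfolding sorted_wrt_iff_nth_Suc_transp[OF tr1] using assms by auto
  have 2: "sorted_wrt (\<lambda>x y. ?f x < ?f y) (drop a w) \<longleftrightarrow>
      (\<forall>t. a \<le> t \<and> t + 1 < length w \<longrightarrow> gw k w t < gw k w (t + 1))"
    unfolding sorted_wrt_iff_nth_Suc_transp[OF tr2]
  proof (intro iffI allI impI)
    fix t assume h: "\<forall>i. Suc i < length (drop a w) \<longrightarrow> ?f (drop a w ! i) < ?f (drop a w ! Suc i)"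
      and t: "a \<le> t \<and> t + 1 < length w"
    have "Suc (t - a) < length (drop a w)" using t by auto
    then have "?f (drop a w ! (t - a)) < ?f (drop a w ! Suc (t - a))" using h by blast
    moreover have "drop a w ! (t - a) = w ! t" "drop a w ! Suc (t - a) = w ! (t + 1)" using t assms by auto
    ultimately show "gw k w t < gw k w (t + 1)" by simp
  next
    fix i assume h: "\<forall>t. a \<le> t \<and> t + 1 < length w \<longrightarrow> gw k w t < gw k w (t + 1)"
      and i: "Suc i < length (drop a w)"
    then have "gw k w (a + i) < gw k w (a + i + 1)" by auto
    then show "?f (drop a w ! i) < ?f (drop a w ! Suc i)" using i assms by simp
  qed
  show ?thesis unfolding Dk_def DA_def 1 2 by simp
qed

lemma hookV_DA: "hookV_at k w j \<longleftrightarrow> 1 \<le> j \<and> j \<le> length w \<and> DA (gw k w) (length w) (j - 1) \<and> DA (gw k w) (length w) j"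
proof -
  have e1: "(\<forall>t. t + 1 < j \<longrightarrow> P t) = ((\<forall>t. t + 1 < j - 1 \<longrightarrow> P t) \<and> (\<forall>t. t + 1 < j \<longrightarrow> P t))" for P :: "nat \<Rightarrow> bool"
    by auto
  have e2: "(\<forall>t. j - 1 \<le> t \<and> t + 1 < length w \<longrightarrow> P t) = ((\<forall>t. j - 1 \<le> t \<and> t + 1 < length w \<longrightarrow> P t) \<and> (\<forall>t. j \<le> t \<and> t + 1 < length w \<longrightarrow> P t))" for P :: "nat \<Rightarrow> bool"
    by auto
  show ?thesis unfolding hookV_at_def DA_def ilt_def
    by (subst e1, subst e2) blast
qed

lemma hookU_DA:
  assumes "amiss k (set w) \<le> k" "set w \<subseteq> {0..k}"
  shows "hookU_at k w j \<longleftrightarrow> 1 \<le> j \<and> j < length w \<and> DA (gw k w) (length w) j \<and> gw k w (j - 1) = gw k w j"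
proof -
  have "(w ! (j - 1) = w ! j) = (gw k w (j - 1) = gw k w j)" if j: "j < length w" "1 \<le> j"
  proof
    assume "gw k w (j - 1) = gw k w j"
    moreover have "w ! (j - 1) \<in> set w" "w ! j \<in> set w" using j by auto
    then have "w ! (j - 1) \<le> k" "w ! j \<le> k" using assms(2) by auto
    ultimately show "w ! (j - 1) = w ! j" using irank_inj[OF assms(1)] by blast
  qed simp
  then show ?thesis unfolding hookU_at_def DA_def ilt_def by auto
qed

lemma asc_eq: "asc k w = card {t. t + 1 < length w \<and> gw k w t < gw k w (t + 1)}"
  unfolding asc_def ilt_def by simp

lemma Zs_DA: "Zs k w = {a. a \<le> length w \<and> DA (gw k w) (length w) a}"
  unfolding Zs_def using Dk_DA by auto

lemma hook_cases:
  assumes "amiss k (set w) \<le> k" "set w \<subseteq> {0..k}" "1 \<le> length w"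
  shows "(Zs k w = {} \<and> \<not> (\<exists>j. hookV_at k w j) \<and> \<not> (\<exists>j. hookU_at k w j))
   \<or> (\<exists>j. hookV_at k w j \<and> Zs k w = {j - 1, j} \<and> 1 \<le> j \<and> j \<le> length w \<and> asc k w = length w - j
          \<and> \<not> (\<exists>j. hookU_at k w j))
   \<or> (\<exists>j. hookU_at k w j \<and> Zs k w = {j} \<and> 1 \<le> j \<and> j < length w \<and> asc k w = length w - j - 1
          \<and> \<not> (\<exists>j. hookV_at k w j))"
proof -
  let ?g = "gw k w" and ?n = "length w"
  note hV = hookV_DA[of k w] and hU = hookU_DA[OF assms(1,2)]
  have VZ: "hookV_at k w j \<Longrightarrow> Zs k w = {j - 1, j}" for j
    unfolding Zs_DA hV using DA_V_Z by blast
  have UZ: "hookU_at k w j \<Longrightarrow> Zs k w = {j}" for j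
    unfolding Zs_DA hU using DA_U_Z by blast
  have VU: "hookV_at k w j \<Longrightarrow> \<not> hookU_at k w j'" for j j'
  proof
    assume "hookV_at k w j" "hookU_at k w j'"
    then have "{j - 1, j} = {j'}" using VZ UZ by simp
    then have "j - 1 = j'" "j = j'" by auto
    then show False using \<open>hookV_at k w j\<close> unfolding hV by linarith
  qed
  show ?thesis
  proof (cases "Zs k w = {}")
    case True
    then show ?thesis using VZ UZ by blast
  next
    case False
    then obtain a where a: "a \<le> ?n" "DA ?g ?n a" unfolding Zs_DA by auto
    from DA_hook[OF a(2) a(1) assms(3)]
    show ?thesis
    proof
      assume "\<exists>j. 1 \<le> j \<and> j \<le> ?n \<and> DA ?g ?n (j - 1) \<and> DA ?g ?n j"
      then obtain j where j: "1 \<le> j" "j \<le> ?n" "DA ?g ?n (j - 1)" "DA ?g ?n j" by blast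
      have V: "hookV_at k w j" using j hV by simp
      have "asc k w = ?n - j" unfolding asc_eq asc_V_set[OF j] using j(1) by simp
      then show ?thesis using V VZ[OF V] VU[OF V] j by blast
    next
      assume "\<exists>j. 1 \<le> j \<and> j < ?n \<and> DA ?g ?n j \<and> ?g (j - 1) = ?g j"
      then obtain j where j: "1 \<le> j" "j < ?n" "DA ?g ?n j" "?g (j - 1) = ?g j" by blast
      have U: "hookU_at k w j" using j hU by simp
      have "asc k w = ?n - j - 1" unfolding asc_eq asc_U_set[OF j] by simp
      then show ?thesis using U UZ[OF U] VU j by blast
    qed
  qed
qed



definition mvc :: "nat \<Rightarrow> nat list \<Rightarrow> nat list" where
  "mvc c Z = (if Z \<noteq> [] \<and> hd Z = c then tl Z @ [c] else c # butlast Z)"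

definition sgc :: "(nat \<Rightarrow> nat) \<Rightarrow> nat \<Rightarrow> nat list \<Rightarrow> nat list" where
  "sgc f c w = (let Y1 = takeWhile (\<lambda>x. f c < f x) w; R = dropWhile (\<lambda>x. f c < f x) w;
     Z = takeWhile (\<lambda>x. \<not> f c < f x) R; Y2 = dropWhile (\<lambda>x. \<not> f c < f x) R in Y1 @ mvc c Z @ Y2)"

lemma tw_Q2: "(\<forall>y\<in>set Q2. f c < f y) \<Longrightarrow> takeWhile (\<lambda>x. \<not> (f::nat\<Rightarrow>nat) c < f x) Q2 = []"
  by (cases Q2) auto

lemma dw_Q2: "(\<forall>y\<in>set Q2. f c < f y) \<Longrightarrow> dropWhile (\<lambda>x. \<not> (f::nat\<Rightarrow>nat) c < f x) Q2 = Q2"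
  by (cases Q2) auto

lemma sgc_1:
  fixes f :: "nat \<Rightarrow> nat"
  assumes "\<forall>y\<in>set P1. f c < f y" "\<forall>y\<in>set X. f y < f c" "X \<noteq> []" "\<forall>y\<in>set Q2. f c < f y"
  shows "sgc f c (P1 @ c # X @ Q2) = P1 @ X @ c # Q2"
proof -
  have 1: "takeWhile (\<lambda>x. f c < f x) (P1 @ c # X @ Q2) = P1" using assms(1) by (simp add: takeWhile_append2)
  have 2: "dropWhile (\<lambda>x. f c < f x) (P1 @ c # X @ Q2) = c # X @ Q2" using assms(1) by (simp add: dropWhile_append2)
  have X: "\<forall>y\<in>set X. \<not> f c < f y" using assms(2) by auto
  have 3: "takeWhile (\<lambda>x. \<not> f c < f x) (c # X @ Q2) = c # X"
    using X tw_Q2[OF assms(4)] by (simp add: takeWhile_append2)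
  have 4: "dropWhile (\<lambda>x. \<not> f c < f x) (c # X @ Q2) = Q2"
    using X dw_Q2[OF assms(4)] by (simp add: dropWhile_append2)
  show ?thesis unfolding sgc_def Let_def 1 2 3 4 mvc_def by simp
qed

lemma sgc_2:
  fixes f :: "nat \<Rightarrow> nat"
  assumes "\<forall>y\<in>set P1. f c < f y" "\<forall>y\<in>set X. f y < f c" "X \<noteq> []" "\<forall>y\<in>set Q2. f c < f y"
  shows "sgc f c (P1 @ X @ c # Q2) = P1 @ c # X @ Q2"
proof -
  obtain x X' where xX: "X = x # X'" using assms(3) by (cases X) auto
  have fx: "f x < f c" using assms(2) xX by auto
  have 1: "takeWhile (\<lambda>x. f c < f x) (P1 @ X @ c # Q2) = P1" using assms(1) fx xX by (simp add: takeWhile_append2)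
  have 2: "dropWhile (\<lambda>x. f c < f x) (P1 @ X @ c # Q2) = X @ c # Q2" using assms(1) fx xX by (simp add: dropWhile_append2)
  have X: "\<forall>y\<in>set X. \<not> f c < f y" using assms(2) by auto
  have 3: "takeWhile (\<lambda>x. \<not> f c < f x) (X @ c # Q2) = X @ [c]"
    using X tw_Q2[OF assms(4)] by (simp add: takeWhile_append2)
  have 4: "dropWhile (\<lambda>x. \<not> f c < f x) (X @ c # Q2) = Q2"
    using X dw_Q2[OF assms(4)] by (simp add: dropWhile_append2)
  have 5: "mvc c (X @ [c]) = c # X" unfolding mvc_def using xX fx by auto
  show ?thesis unfolding sgc_def Let_def 1 2 3 4 5 by simp
qed

lemma split_left:
  fixes f :: "nat \<Rightarrow> nat"
  assumes P: "sorted_wrt (\<lambda>x y. f y < f x) P" and Q: "sorted_wrt (\<lambda>x y. f x < f y) Q"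
    and cP: "c \<in> set P" and cQ: "c \<notin> set Q" and inj: "inj_on f (set (P @ Q))"
    and ex: "\<exists>x\<in>set (P @ Q). f x < f c"
  shows "\<exists>P1 P2 Q1 Q2. P = P1 @ c # P2 \<and> Q = Q1 @ Q2 \<and> (\<forall>y\<in>set P1. f c < f y) \<and>
     (\<forall>y\<in>set P2. f y < f c) \<and> (\<forall>y\<in>set Q1. f y < f c) \<and> (\<forall>y\<in>set Q2. f c < f y) \<and> P2 @ Q1 \<noteq> []"
proof -
  obtain P1 P2 where PP: "P = P1 @ c # P2" using split_list[OF cP] by blast
  have p1: "\<forall>y\<in>set P1. f c < f y" and p2: "\<forall>y\<in>set P2. f y < f c"
    using P unfolding PP sorted_wrt_append by auto
  define Q1 where "Q1 = filter (\<lambda>y. f y < f c) Q"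
  define Q2 where "Q2 = filter (\<lambda>y. f c < f y) Q"
  have ne: "\<forall>y\<in>set Q. f y \<noteq> f c"
  proof
    fix y assume y: "y \<in> set Q"
    then have "y \<noteq> c" using cQ by auto
    then show "f y \<noteq> f c" using inj y cP unfolding inj_on_def by auto
  qed
  have QQ: "Q = Q1 @ Q2" unfolding Q1_def Q2_def by (rule split_filter_inc[OF Q ne])
  have q1: "\<forall>y\<in>set Q1. f y < f c" and q2: "\<forall>y\<in>set Q2. f c < f y" unfolding Q1_def Q2_def by auto
  have "P2 @ Q1 \<noteq> []"
  proof -
    obtain x where x: "x \<in> set (P @ Q)" "f x < f c" using ex by blast
    then have "x \<in> set P2 \<or> x \<in> set Q1" using p1 unfolding PP Q1_def by auto
    then show ?thesis by auto
  qed
  then show ?thesis using PP QQ p1 p2 q1 q2 by blast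
qed

lemma split_right:
  fixes f :: "nat \<Rightarrow> nat"
  assumes P: "sorted_wrt (\<lambda>x y. f y < f x) P" and Q: "sorted_wrt (\<lambda>x y. f x < f y) Q"
    and cQ: "c \<in> set Q" and cP: "c \<notin> set P" and inj: "inj_on f (set (P @ Q))"
    and ex: "\<exists>x\<in>set (P @ Q). f x < f c"
  shows "\<exists>P1 P2 Q1 Q2. P = P1 @ P2 \<and> Q = Q1 @ c # Q2 \<and> (\<forall>y\<in>set P1. f c < f y) \<and>
     (\<forall>y\<in>set P2. f y < f c) \<and> (\<forall>y\<in>set Q1. f y < f c) \<and> (\<forall>y\<in>set Q2. f c < f y) \<and> P2 @ Q1 \<noteq> []"
proof -
  obtain Q1 Q2 where QQ: "Q = Q1 @ c # Q2" using split_list[OF cQ] by blast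
  have q1: "\<forall>y\<in>set Q1. f y < f c" and q2: "\<forall>y\<in>set Q2. f c < f y"
    using Q unfolding QQ sorted_wrt_append by auto
  define P1 where "P1 = filter (\<lambda>y. f c < f y) P"
  define P2 where "P2 = filter (\<lambda>y. f y < f c) P"
  have ne: "\<forall>y\<in>set P. f y \<noteq> f c"
  proof
    fix y assume y: "y \<in> set P"
    then have "y \<noteq> c" using cP by auto
    then show "f y \<noteq> f c" using inj y cQ unfolding inj_on_def by auto
  qed
  have PP: "P = P1 @ P2" unfolding P1_def P2_def by (rule split_filter_dec[OF P ne])
  have p1: "\<forall>y\<in>set P1. f c < f y" and p2: "\<forall>y\<in>set P2. f y < f c" unfolding P1_def P2_def by auto
  have "P2 @ Q1 \<noteq> []"
  proof -
    obtain x where x: "x \<in> set (P @ Q)" "f x < f c" using ex by blast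
    then have "x \<in> set P2 \<or> x \<in> set Q1" using q2 unfolding QQ P2_def by auto
    then show ?thesis by auto
  qed
  then show ?thesis using PP QQ p1 p2 q1 q2 by blast
qed



definition umc :: "nat \<Rightarrow> nat list \<Rightarrow> nat" where
  "umc k w = (SOME c. is_umin k w c)"

definition sg :: "nat \<Rightarrow> nat list \<Rightarrow> nat list" where
  "sg k w = sgc (irank k (set w)) (umc k w) w"

definition NW :: "nat \<Rightarrow> nat list \<Rightarrow> bool" where
  "NW k w \<longleftrightarrow> set w \<subseteq> {0..k} \<and> length w \<le> k \<and> Zs k w \<noteq> {} \<and> \<not> weak_connected k w"

lemma gap_set: "set u = set v \<Longrightarrow> gap_letters k u = gap_letters k v"
  unfolding gap_letters_def by simp

lemma umin_set: "set u = set v \<Longrightarrow> is_umin k u c = is_umin k v c"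
  unfolding is_umin_def gap_letters_def by simp

lemma umc_set: "set u = set v \<Longrightarrow> umc k u = umc k v"
proof -
  assume "set u = set v"
  then have "is_umin k u = is_umin k v" using umin_set by blast
  then show ?thesis unfolding umc_def by simp
qed

lemma kc_set: "set u = set v \<Longrightarrow> k_connected k u = k_connected k v"
  unfolding k_connected_def by simp

lemma wc_perm: "set u = set v \<Longrightarrow> (\<forall>x. count_list u x = count_list v x) \<Longrightarrow> weak_connected k u = weak_connected k v"
proof -
  assume a: "set u = set v" "\<forall>x. count_list u x = count_list v x"
  have "k_connected k u = k_connected k v" using kc_set[OF a(1)] .
  moreover have "is_umin k u = is_umin k v" using umin_set[OF a(1)] by blast
  ultimately show ?thesis unfolding weak_connected_def using a(2) by simp
qed

lemma ex_min_f:
  fixes f :: "nat \<Rightarrow> nat"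
  assumes "finite T" "T \<noteq> {}"
  shows "\<exists>t\<in>T. \<forall>s\<in>T. f t \<le> f s"
proof -
  have "Min (f ` T) \<in> f ` T" using assms by simp
  then obtain t where t: "t \<in> T" "f t = Min (f ` T)" by auto
  have "\<forall>s\<in>T. f t \<le> f s" using t(2) assms(1) by (metis Min_le finite_imageI imageI)
  then show ?thesis using t(1) by blast
qed

lemma ex_max_f:
  fixes f :: "nat \<Rightarrow> nat"
  assumes "finite T" "T \<noteq> {}"
  shows "\<exists>t\<in>T. \<forall>s\<in>T. f s \<le> f t"
proof -
  have "Max (f ` T) \<in> f ` T" using assms by simp
  then obtain t where t: "t \<in> T" "f t = Max (f ` T)" by auto
  have "\<forall>s\<in>T. f s \<le> f t" using t(2) assms(1) by (metis Max_ge finite_imageI imageI)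
  then show ?thesis using t(1) by blast
qed

lemma umin_exists:
  assumes Sk: "set w \<subseteq> {0..k}" and am: "amiss k (set w) \<le> k" "amiss k (set w) \<notin> set w"
    and nk: "\<not> k_connected k w"
  shows "\<exists>c. is_umin k w c"
proof -
  let ?S = "set w" and ?f = "irank k (set w)"
  have "\<exists>x\<in>?S. \<exists>z\<in>?S. \<exists>y. y \<le> k \<and> y \<noteq> amiss k ?S \<and> ?f x < ?f y \<and> ?f y < ?f z \<and> y \<notin> ?S"
    using nk unfolding k_connected_def ilt_def by simp
  then obtain x z y where xyz: "x \<in> ?S" "z \<in> ?S" "y \<le> k" "y \<noteq> amiss k ?S" "?f x < ?f y" "?f y < ?f z" "y \<notin> ?S"
    by blast
  let ?T1 = "{s\<in>?S. ?f y < ?f s}" and ?T2 = "{s\<in>?S. ?f s < ?f y}"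
  obtain c0 where c0: "c0 \<in> ?T1" "\<forall>s\<in>?T1. ?f c0 \<le> ?f s"
    using ex_min_f[of ?T1 ?f] xyz by auto
  obtain a0 where a0: "a0 \<in> ?T2" "\<forall>s\<in>?T2. ?f s \<le> ?f a0"
    using ex_max_f[of ?T2 ?f] xyz by auto
  have a0k: "a0 \<le> k" "a0 \<noteq> amiss k ?S" using a0 Sk am by auto
  have "isuc k a0 \<noteq> c0"
  proof
    assume "isuc k a0 = c0"
    then have "?f c0 = ?f a0 + 1" using irank_isuc[OF am(1) a0k] by simp
    then show False using a0 c0 by auto
  qed
  moreover have nb: "\<not> (\<exists>b\<in>?S. ilt k ?S a0 b \<and> ilt k ?S b c0)"
  proof
    assume "\<exists>b\<in>?S. ilt k ?S a0 b \<and> ilt k ?S b c0"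
    then obtain b where b: "b \<in> ?S" "?f a0 < ?f b" "?f b < ?f c0" unfolding ilt_def by auto
    consider "?f b < ?f y" | "?f y < ?f b" | "?f b = ?f y" by linarith
    then show False
    proof cases
      case 1
      then have "b \<in> ?T2" using b by simp
      then show False using a0(2) b by fastforce
    next
      case 2
      then have "b \<in> ?T1" using b by simp
      then show False using c0(2) b by fastforce
    next
      case 3
      then have "b = y" using irank_inj[OF am(1), of b y] b Sk xyz by auto
      then show False using b xyz by simp
    qed
  qed
  moreover have "c0 \<in> ?S" "a0 \<in> ?S" "ilt k ?S a0 c0" using a0 c0 unfolding ilt_def by auto
  ultimately have "c0 \<in> gap_letters k w" unfolding gap_letters_def by blast
  then have G: "gap_letters k w \<noteq> {}" "finite (gap_letters k w)"
    unfolding gap_letters_def by auto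
  obtain c where c: "c \<in> gap_letters k w" "\<forall>c'\<in>gap_letters k w. ?f c \<le> ?f c'"
    using ex_min_f[OF G(2) G(1), of ?f] by auto
  then have "is_umin k w c" unfolding is_umin_def ilt_def by (auto simp: not_less)
  then show ?thesis by blast
qed

lemma umin_unique:
  assumes "set w \<subseteq> {0..k}" "amiss k (set w) \<le> k" "is_umin k w c" "is_umin k w c'"
  shows "c = c'"
proof -
  have "c \<in> set w" "c' \<in> set w" using assms(3,4) unfolding is_umin_def gap_letters_def by auto
  moreover have "irank k (set w) c = irank k (set w) c'"
    using assms(3,4) unfolding is_umin_def ilt_def by (meson linorder_neqE_nat)
  moreover have "c \<le> k" "c' \<le> k" using calculation(1,2) assms(1) by auto
  ultimately show ?thesis using irank_inj[OF assms(2)] by blast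
qed

lemma umin_props:
  assumes Sk: "set w \<subseteq> {0..k}" and am: "amiss k (set w) \<le> k" "amiss k (set w) \<notin> set w"
    and u: "is_umin k w c"
  shows "c \<in> set w" "c \<le> k" "\<exists>x\<in>set w. irank k (set w) x < irank k (set w) c"
    "\<And>x. x \<in> set w \<Longrightarrow> irank k (set w) x < irank k (set w) c \<Longrightarrow> isuc k x \<noteq> c \<and> isuc k c \<noteq> x"
proof -
  let ?S = "set w" and ?f = "irank k (set w)"
  have g: "c \<in> gap_letters k w" using u unfolding is_umin_def by simp
  then obtain a where a: "a \<in> ?S" "?f a < ?f c" "isuc k a \<noteq> c" "\<not> (\<exists>b\<in>?S. ?f a < ?f b \<and> ?f b < ?f c)"
    unfolding gap_letters_def ilt_def by auto
  show c: "c \<in> set w" using g unfolding gap_letters_def by auto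
  then show ck: "c \<le> k" using Sk by auto
  show "\<exists>x\<in>set w. ?f x < ?f c" using a by auto
  fix x assume x: "x \<in> set w" "?f x < ?f c"
  have xk: "x \<le> k" "x \<noteq> amiss k ?S" using x Sk am by auto
  have ck2: "c \<noteq> amiss k ?S" using c am by auto
  have "isuc k x \<noteq> c"
  proof
    assume h: "isuc k x = c"
    then have fc: "?f c = ?f x + 1" using irank_isuc[OF am(1) xk] by simp
    show False
    proof (cases "?f a < ?f x")
      case True then show False using a x by auto
    next
      case False
      then have "?f a = ?f x" using a fc by simp
      then have "a = x" using irank_inj[OF am(1), of a x] a Sk xk by auto
      then show False using a h by simp
    qed
  qed
  moreover have "isuc k c \<noteq> x"
  proof
    assume "isuc k c = x"
    then have "?f x = ?f c + 1" using irank_isuc[OF am(1) ck ck2] by simp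
    then show False using x by simp
  qed
  ultimately show "isuc k x \<noteq> c \<and> isuc k c \<noteq> x" by simp
qed

lemma distinct_count_le1: "distinct xs \<Longrightarrow> count_list xs x \<le> 1"
  by (induction xs) auto

lemma NW_basic:
  assumes "NW k w"
  shows "amiss k (set w) \<le> k" "amiss k (set w) \<notin> set w" "is_umin k w (umc k w)"
    "count_list w (umc k w) = 1" "inj_on (irank k (set w)) (set w)"
proof -
  have Sk: "set w \<subseteq> {0..k}" "length w \<le> k" "Zs k w \<noteq> {}" "\<not> weak_connected k w"
    using assms unfolding NW_def by auto
  have "card (set w) \<le> k" using card_length[of w] Sk by simp
  then have Sp: "set w \<noteq> {0..k}" using card_proper[OF Sk(1)] by simp
  note am = amiss_props[OF Sk(1) Sp]
  show "amiss k (set w) \<le> k" "amiss k (set w) \<notin> set w" using am by auto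
  have "\<not> k_connected k w" using Sk unfolding weak_connected_def by simp
  then have "\<exists>c. is_umin k w c" using umin_exists[OF Sk(1) am(1,2)] by simp
  then show u: "is_umin k w (umc k w)" unfolding umc_def by (rule someI_ex)
  show "inj_on (irank k (set w)) (set w)" using irank_inj_on[OF am(1) Sk(1)] .
  let ?c = "umc k w"
  have ne2: "count_list w ?c \<noteq> 2"
  proof
    assume "count_list w ?c = 2"
    then have "weak_connected k w" unfolding weak_connected_def using u by blast
    then show False using Sk(4) by simp
  qed
  have "?c \<in> set w" using umin_props(1)[OF Sk(1) am(1,2) u] .
  then have ge1: "count_list w ?c \<noteq> 0" by (simp add: count_list_0_iff)
  obtain a where a: "a \<in> Zs k w" using Sk by auto
  then have "Dk k w a" unfolding Zs_def by auto
  then have "distinct (take a w)" "distinct (drop a w)" unfolding Dk_def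
    using dec_distinct[of "irank k (set w)" "take a w"] inc_distinct[of "irank k (set w)" "drop a w"] by auto
  then have "count_list (take a w) ?c \<le> 1" "count_list (drop a w) ?c \<le> 1"
    using distinct_count_le1 by auto
  moreover have "count_list w ?c = count_list (take a w) ?c + count_list (drop a w) ?c"
    by (metis append_take_drop_id count_list_append)
  ultimately show "count_list w ?c = 1" using ne2 ge1 by linarith
qed



lemma NW_facts:
  assumes nw: "NW k w"
  shows "set w \<subseteq> {0..k}" "umc k w \<in> set w" "umc k w \<le> k"
    "\<exists>x\<in>set w. irank k (set w) x < irank k (set w) (umc k w)"
    "\<And>x. x \<in> set w \<Longrightarrow> irank k (set w) x < irank k (set w) (umc k w) \<Longrightarrow> isuc k x \<noteq> umc k w \<and> isuc k (umc k w) \<noteq> x"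
proof -
  note B = NW_basic[OF nw]
  show Sk: "set w \<subseteq> {0..k}" using nw unfolding NW_def by simp
  note up = umin_props[OF Sk B(1) B(2) B(3)]
  show "umc k w \<in> set w" "umc k w \<le> k" "\<exists>x\<in>set w. irank k (set w) x < irank k (set w) (umc k w)"
    using up by auto
  fix x assume "x \<in> set w" "irank k (set w) x < irank k (set w) (umc k w)"
  then show "isuc k x \<noteq> umc k w \<and> isuc k (umc k w) \<noteq> x" using up(4) by blast
qed

lemma NW_left:
  assumes nw: "NW k w" and a: "a \<in> Zs k w" and cl: "umc k w \<in> set (take a w)"
  shows "1 \<le> a" "Dk k (sg k w) (a - 1)" "umc k w \<notin> set (take (a - 1) (sg k w))"
    "set (sg k w) = set w" "\<forall>x. count_list (sg k w) x = count_list w x" "length (sg k w) = length w"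
    "sg k (sg k w) = w" "sg k w \<noteq> w" "weq k w (sg k w)"
proof -
  define c where "c = umc k w"
  define f where "f = irank k (set w)"
  define P where "P = take a w"
  define Q where "Q = drop a w"
  note B = NW_basic[OF nw] and F = NW_facts[OF nw]
  have an: "a \<le> length w" "Dk k w a" using a unfolding Zs_def by auto
  have sP: "sorted_wrt (\<lambda>x y. f y < f x) P" and sQ: "sorted_wrt (\<lambda>x y. f x < f y) Q"
    using an(2) unfolding Dk_def P_def Q_def f_def by auto
  have wPQ: "w = P @ Q" unfolding P_def Q_def by simp
  have cP: "c \<in> set P" using cl unfolding c_def P_def .
  have "count_list w c = count_list P c + count_list Q c" using wPQ by simp
  moreover have "count_list P c \<noteq> 0" using cP by (simp add: count_list_0_iff)
  ultimately have "count_list Q c = 0" using B(4) unfolding c_def by linarith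
  then have cQ: "c \<notin> set Q" by (simp add: count_list_0_iff)
  have inj: "inj_on f (set (P @ Q))" using B(5) wPQ unfolding f_def by simp
  have ex: "\<exists>x\<in>set (P @ Q). f x < f c" using F(4) wPQ unfolding f_def c_def by simp
  obtain P1 P2 Q1 Q2 where sp: "P = P1 @ c # P2" "Q = Q1 @ Q2" "\<forall>y\<in>set P1. f c < f y"
    "\<forall>y\<in>set P2. f y < f c" "\<forall>y\<in>set Q1. f y < f c" "\<forall>y\<in>set Q2. f c < f y" "P2 @ Q1 \<noteq> []"
    using split_left[OF sP sQ cP cQ inj ex] by blast
  define X where "X = P2 @ Q1"
  have Xf: "\<forall>y\<in>set X. f y < f c" "X \<noteq> []" using sp unfolding X_def by auto
  have w_eq: "w = P1 @ c # X @ Q2" using wPQ sp unfolding X_def by simp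
  have sgw: "sg k w = sgc f c w" unfolding sg_def f_def c_def ..
  have sg_eq: "sg k w = P1 @ X @ c # Q2"
    unfolding sgw using sgc_1[OF sp(3) Xf(1) Xf(2) sp(6)] w_eq by simp
  show set_eq: "set (sg k w) = set w" unfolding sg_eq using w_eq by auto
  show "\<forall>x. count_list (sg k w) x = count_list w x" unfolding sg_eq using w_eq by simp
  show "length (sg k w) = length w" unfolding sg_eq using w_eq by simp
  show "1 \<le> a" using cl by (cases a) auto
  have lP: "length P = a" unfolding P_def using an by simp
  have l12: "length (P1 @ P2) = a - 1" using lP sp(1) by simp
  have sg2: "sg k w = (P1 @ P2) @ (Q1 @ c # Q2)" unfolding sg_eq X_def by simp
  have tk: "take (a - 1) (sg k w) = P1 @ P2" "drop (a - 1) (sg k w) = Q1 @ c # Q2"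
    unfolding sg2 using l12 by (metis append_eq_conv_conj)+
  have s1: "sorted_wrt (\<lambda>x y. f y < f x) (P1 @ P2)" using sP unfolding sp(1) by (auto simp: sorted_wrt_append)
  have s2: "sorted_wrt (\<lambda>x y. f x < f y) (Q1 @ c # Q2)" using sQ sp(5,6) unfolding sp(2)
    by (auto simp: sorted_wrt_append)
  show "Dk k (sg k w) (a - 1)" unfolding Dk_def set_eq tk using s1 s2 unfolding f_def by simp
  show "umc k w \<notin> set (take (a - 1) (sg k w))" unfolding tk c_def[symmetric] using sp(3,4) by auto
  have umc2: "umc k (sg k w) = c" using umc_set[OF set_eq] unfolding c_def .
  have sgsg: "sg k (sg k w) = sgc f c (sg k w)"
    using sg_def[of k "sg k w"] umc2 set_eq unfolding f_def by simp
  show "sg k (sg k w) = w"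
  proof -
    have "sg k (sg k w) = sgc f c (P1 @ X @ c # Q2)" using sgsg sg_eq by simp
    also have "\<dots> = w" using sgc_2[OF sp(3) Xf(1) Xf(2) sp(6)] w_eq by simp
    finally show ?thesis .
  qed
  show "sg k w \<noteq> w"
  proof
    assume "sg k w = w"
    then have "X @ c # Q2 = c # X @ Q2" using sg_eq w_eq by simp
    then have "hd X = c" using Xf(2) by (cases X) auto
    then show False using Xf by (cases X) auto
  qed
  have Xk: "set X \<subseteq> set w" using w_eq by auto
  have cm: "weq k (c # X) (X @ [c])"
  proof (rule weq_commute)
    show "c \<le> k" using F(3) unfolding c_def .
    fix y assume y: "y \<in> set X"
    then have "y \<in> set w" "f y < f c" using Xk Xf by auto
    then show "y \<le> k \<and> isuc k c \<noteq> y \<and> isuc k y \<noteq> c" using F(1) F(5)[of y] unfolding f_def c_def by auto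
  qed
  have ctx: "set P1 \<subseteq> {0..k}" "set Q2 \<subseteq> {0..k}" using F(1) w_eq by auto
  show "weq k w (sg k w)" using weq_ctx[OF cm ctx] unfolding sg_eq using w_eq by simp
qed

lemma NW_right:
  assumes nw: "NW k w" and a: "a \<in> Zs k w" and cr: "umc k w \<notin> set (take a w)"
  shows "Dk k (sg k w) (a + 1)" "a + 1 \<le> length w" "umc k w \<in> set (take (a + 1) (sg k w))"
    "set (sg k w) = set w" "\<forall>x. count_list (sg k w) x = count_list w x" "length (sg k w) = length w"
    "sg k (sg k w) = w" "sg k w \<noteq> w" "weq k w (sg k w)"
proof -
  define c where "c = umc k w"
  define f where "f = irank k (set w)"
  define P where "P = take a w"
  define Q where "Q = drop a w"
  note B = NW_basic[OF nw] and F = NW_facts[OF nw]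
  have an: "a \<le> length w" "Dk k w a" using a unfolding Zs_def by auto
  have sP: "sorted_wrt (\<lambda>x y. f y < f x) P" and sQ: "sorted_wrt (\<lambda>x y. f x < f y) Q"
    using an(2) unfolding Dk_def P_def Q_def f_def by auto
  have wPQ: "w = P @ Q" unfolding P_def Q_def by simp
  have cP: "c \<notin> set P" using cr unfolding c_def P_def .
  have cQ: "c \<in> set Q" using F(2) cP wPQ unfolding c_def by (metis Un_iff set_append)
  have inj: "inj_on f (set (P @ Q))" using B(5) wPQ unfolding f_def by simp
  have ex: "\<exists>x\<in>set (P @ Q). f x < f c" using F(4) wPQ unfolding f_def c_def by simp
  obtain P1 P2 Q1 Q2 where sp: "P = P1 @ P2" "Q = Q1 @ c # Q2" "\<forall>y\<in>set P1. f c < f y"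
    "\<forall>y\<in>set P2. f y < f c" "\<forall>y\<in>set Q1. f y < f c" "\<forall>y\<in>set Q2. f c < f y" "P2 @ Q1 \<noteq> []"
    using split_right[OF sP sQ cQ cP inj ex] by blast
  define X where "X = P2 @ Q1"
  have Xf: "\<forall>y\<in>set X. f y < f c" "X \<noteq> []" using sp unfolding X_def by auto
  have w_eq: "w = P1 @ X @ c # Q2" using wPQ sp unfolding X_def by simp
  have sgw: "sg k w = sgc f c w" unfolding sg_def f_def c_def ..
  have sg_eq: "sg k w = P1 @ c # X @ Q2"
    unfolding sgw using sgc_2[OF sp(3) Xf(1) Xf(2) sp(6)] w_eq by simp
  show set_eq: "set (sg k w) = set w" unfolding sg_eq using w_eq by auto
  show "\<forall>x. count_list (sg k w) x = count_list w x" unfolding sg_eq using w_eq by simp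
  show "length (sg k w) = length w" unfolding sg_eq using w_eq by simp
  have lP: "length P = a" unfolding P_def using an by simp
  have l12: "length (P1 @ c # P2) = a + 1" using lP sp(1) by simp
  show "a + 1 \<le> length w" using lP wPQ sp(2) by simp
  have sg2: "sg k w = (P1 @ c # P2) @ (Q1 @ Q2)" unfolding sg_eq X_def by simp
  have tk: "take (a + 1) (sg k w) = P1 @ c # P2" "drop (a + 1) (sg k w) = Q1 @ Q2"
    unfolding sg2 using l12 by (metis append_eq_conv_conj)+
  have s1: "sorted_wrt (\<lambda>x y. f y < f x) (P1 @ c # P2)" using sP sp(3,4) unfolding sp(1)
    by (auto simp: sorted_wrt_append)
  have s2: "sorted_wrt (\<lambda>x y. f x < f y) (Q1 @ Q2)" using sQ unfolding sp(2)
    by (auto simp: sorted_wrt_append)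
  show "Dk k (sg k w) (a + 1)" unfolding Dk_def set_eq tk using s1 s2 unfolding f_def by simp
  show "umc k w \<in> set (take (a + 1) (sg k w))" unfolding tk c_def[symmetric] by simp
  have umc2: "umc k (sg k w) = c" using umc_set[OF set_eq] unfolding c_def .
  have sgsg: "sg k (sg k w) = sgc f c (sg k w)"
    using sg_def[of k "sg k w"] umc2 set_eq unfolding f_def by simp
  show "sg k (sg k w) = w"
  proof -
    have "sg k (sg k w) = sgc f c (P1 @ c # X @ Q2)" using sgsg sg_eq by simp
    also have "\<dots> = w" using sgc_1[OF sp(3) Xf(1) Xf(2) sp(6)] w_eq by simp
    finally show ?thesis .
  qed
  show "sg k w \<noteq> w"
  proof
    assume "sg k w = w"
    then have "X @ c # Q2 = c # X @ Q2" using sg_eq w_eq by simp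
    then have "hd X = c" using Xf(2) by (cases X) auto
    then show False using Xf by (cases X) auto
  qed
  have Xk: "set X \<subseteq> set w" using w_eq by auto
  have cm: "weq k (c # X) (X @ [c])"
  proof (rule weq_commute)
    show "c \<le> k" using F(3) unfolding c_def .
    fix y assume y: "y \<in> set X"
    then have "y \<in> set w" "f y < f c" using Xk Xf by auto
    then show "y \<le> k \<and> isuc k c \<noteq> y \<and> isuc k y \<noteq> c" using F(1) F(5)[of y] unfolding f_def c_def by auto
  qed
  have ctx: "set P1 \<subseteq> {0..k}" "set Q2 \<subseteq> {0..k}" using F(1) w_eq by auto
  show "weq k w (sg k w)" using weq_sym[OF weq_ctx[OF cm ctx]] unfolding sg_eq using w_eq by simp
qed



lemma NW_side_aux:
  assumes nw: "NW k w" and a: "a \<in> Zs k w" and a1: "a + 1 \<in> Zs k w"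
    and c1: "umc k w \<in> set (take (a + 1) w)"
  shows "umc k w \<in> set (take a w)"
proof (rule ccontr)
  assume nc: "umc k w \<notin> set (take a w)"
  define c where "c = umc k w"
  define f where "f = irank k (set w)"
  note F = NW_facts[OF nw]
  have al: "a < length w" "Dk k w a" "Dk k w (a + 1)" using a a1 unfolding Zs_def by auto
  have t1: "take (a + 1) w = take a w @ [w ! a]" using al(1) by (simp add: take_Suc_conv_app_nth)
  have cwa: "c = w ! a" using c1 nc t1 unfolding c_def by auto
  have d1: "drop a w = w ! a # drop (a + 1) w" using al(1) by (simp add: Cons_nth_drop_Suc)
  have s1: "sorted_wrt (\<lambda>x y. f y < f x) (take a w @ [w ! a])" using al(3) t1 unfolding Dk_def f_def by simp
  have s2: "sorted_wrt (\<lambda>x y. f x < f y) (w ! a # drop (a + 1) w)" using al(2) d1 unfolding Dk_def f_def by simp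
  have lo1: "\<forall>y\<in>set (take a w). f c < f y" using s1 cwa by (simp add: sorted_wrt_append)
  have lo2: "\<forall>y\<in>set (drop (a + 1) w). f c < f y" using s2 cwa by simp
  have wsp: "w = take a w @ w ! a # drop (a + 1) w" using al(1) by (simp add: id_take_nth_drop)
  obtain x where x: "x \<in> set w" "f x < f c" using F(4) unfolding f_def c_def by blast
  have "x \<in> set (take a w) \<or> x = c \<or> x \<in> set (drop (a + 1) w)" using x(1) wsp cwa
    by (metis Un_iff set_ConsD set_append)
  then show False using x lo1 lo2 by auto
qed

lemma NW_side:
  assumes nw: "NW k w" and a: "a \<in> Zs k w" and b: "b \<in> Zs k w" and ca: "umc k w \<in> set (take a w)"
  shows "umc k w \<in> set (take b w)"
proof -
  have DA: "DA (gw k w) (length w) a" "DA (gw k w) (length w) b" "a \<le> length w" "b \<le> length w"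
    using a b unfolding Zs_DA by auto
  consider "a = b" | "a < b" | "b < a" by linarith
  then show ?thesis
  proof cases
    case 1 then show ?thesis using ca by simp
  next
    case 2
    then have "set (take a w) \<subseteq> set (take b w)" by (simp add: set_take_subset_set_take)
    then show ?thesis using ca by auto
  next
    case 3
    then have "a = b + 1" using DA_A1[OF DA(2) DA(1) 3 DA(3)] by simp
    then show ?thesis using NW_side_aux[OF nw b] a ca by simp
  qed
qed

definition leftw :: "nat \<Rightarrow> nat list \<Rightarrow> bool" where
  "leftw k w \<longleftrightarrow> (\<exists>a\<in>Zs k w. umc k w \<in> set (take a w))"

lemma NW_sg_basic:
  assumes nw: "NW k w"
  shows "NW k (sg k w)" "sg k (sg k w) = w" "sg k w \<noteq> w" "weq k w (sg k w)"
    "length (sg k w) = length w" "set (sg k w) = set w" "umc k (sg k w) = umc k w"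
proof -
  obtain a where a: "a \<in> Zs k w" using nw unfolding NW_def by auto
  have nw': "set w \<subseteq> {0..k}" "length w \<le> k" "\<not> weak_connected k w" using nw unfolding NW_def by auto
  have gen: "NW k (sg k w) \<and> sg k (sg k w) = w \<and> sg k w \<noteq> w \<and> weq k w (sg k w) \<and>
    length (sg k w) = length w \<and> set (sg k w) = set w"
  proof (cases "umc k w \<in> set (take a w)")
    case True
    note L = NW_left[OF nw a True]
    have "a - 1 \<in> Zs k (sg k w)" unfolding Zs_def using L(2,6) a unfolding Zs_def by auto
    moreover have "\<not> weak_connected k (sg k w)" using wc_perm[OF L(4) L(5)] nw' by simp
    ultimately have "NW k (sg k w)" unfolding NW_def using L nw' by auto
    then show ?thesis using L by simp
  next
    case False
    note R = NW_right[OF nw a False]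
    have "a + 1 \<in> Zs k (sg k w)" unfolding Zs_def using R(1,2,6) by auto
    moreover have "\<not> weak_connected k (sg k w)" using wc_perm[OF R(4) R(5)] nw' by simp
    ultimately have "NW k (sg k w)" unfolding NW_def using R nw' by auto
    then show ?thesis using R by simp
  qed
  then show "NW k (sg k w)" "sg k (sg k w) = w" "sg k w \<noteq> w" "weq k w (sg k w)"
    "length (sg k w) = length w" "set (sg k w) = set w" by auto
  then show "umc k (sg k w) = umc k w" using umc_set by blast
qed

lemma NW_sg_left:
  assumes nw: "NW k w" and lw: "leftw k w"
  shows "Zs k (sg k w) = (\<lambda>a. a - 1) ` Zs k w" "\<not> leftw k (sg k w)" "0 \<notin> Zs k w"
proof -
  note S = NW_sg_basic[OF nw]
  let ?c = "umc k w"
  obtain a0 where a0: "a0 \<in> Zs k w" "?c \<in> set (take a0 w)" using lw unfolding leftw_def by blast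
  have allL: "\<And>a. a \<in> Zs k w \<Longrightarrow> ?c \<in> set (take a w)" using NW_side[OF nw a0(1) _ a0(2)] by blast
  note L0 = NW_left[OF nw a0(1) a0(2)]
  have a0s: "a0 - 1 \<in> Zs k (sg k w)" using L0(2,6) a0(1) unfolding Zs_def by auto
  have allR: "?c \<notin> set (take a' (sg k w))" if a': "a' \<in> Zs k (sg k w)" for a'
  proof
    assume "?c \<in> set (take a' (sg k w))"
    then have "umc k (sg k w) \<in> set (take a' (sg k w))" using S(7) by simp
    then have "umc k (sg k w) \<in> set (take (a0 - 1) (sg k w))" using NW_side[OF S(1) a' a0s] by blast
    then show False using L0(3) S(7) by simp
  qed
  show "\<not> leftw k (sg k w)" unfolding leftw_def using allR S(7) by auto
  show "0 \<notin> Zs k w" using allL by fastforce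
  show "Zs k (sg k w) = (\<lambda>a. a - 1) ` Zs k w"
  proof
    show "(\<lambda>a. a - 1) ` Zs k w \<subseteq> Zs k (sg k w)"
    proof
      fix b assume "b \<in> (\<lambda>a. a - 1) ` Zs k w"
      then obtain a where a: "a \<in> Zs k w" "b = a - 1" by auto
      note L = NW_left[OF nw a(1) allL[OF a(1)]]
      show "b \<in> Zs k (sg k w)" using L(2,6) a unfolding Zs_def by auto
    qed
  next
    show "Zs k (sg k w) \<subseteq> (\<lambda>a. a - 1) ` Zs k w"
    proof
      fix a' assume a': "a' \<in> Zs k (sg k w)"
      have nc: "umc k (sg k w) \<notin> set (take a' (sg k w))" using allR[OF a'] S(7) by simp
      note R = NW_right[OF S(1) a' nc]
      have "a' + 1 \<in> Zs k w" using R(1,2) S(2,5) unfolding Zs_def by auto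
      then show "a' \<in> (\<lambda>a. a - 1) ` Zs k w" by (metis add_diff_cancel_right' image_eqI)
    qed
  qed
qed

lemma NW_sg_right:
  assumes nw: "NW k w" and lw: "\<not> leftw k w"
  shows "leftw k (sg k w)"
proof -
  note S = NW_sg_basic[OF nw]
  obtain a where a: "a \<in> Zs k w" using nw unfolding NW_def by auto
  have nc: "umc k w \<notin> set (take a w)" using lw a unfolding leftw_def by auto
  note R = NW_right[OF nw a nc]
  have "a + 1 \<in> Zs k (sg k w)" unfolding Zs_def using R(1,2,6) by auto
  then show ?thesis unfolding leftw_def using R(3) S(7) by auto
qed



lemma invol_aux:
  fixes F :: falg
  shows "finite {w. F w \<noteq> 0} \<Longrightarrow> card {w. F w \<noteq> 0} = n \<Longrightarrow>
    (\<forall>w. F w \<noteq> 0 \<longrightarrow> \<sigma> w \<noteq> w \<and> \<sigma> (\<sigma> w) = w \<and> F (\<sigma> w) = - F w \<and> weq k w (\<sigma> w)) \<Longrightarrow>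
    F \<in> rel_ideal k"
proof (induction n arbitrary: F rule: less_induct)
  case (less n)
  show ?case
  proof (cases "{w. F w \<noteq> 0} = {}")
    case True
    then have F0: "F = 0" by (auto simp: fun_eq_iff)
    show ?thesis by (simp only: F0) (rule rel_ideal.zero)
  next
    case False
    then obtain w0 where w0: "F w0 \<noteq> 0" by auto
    have h0: "\<sigma> w0 \<noteq> w0" "\<sigma> (\<sigma> w0) = w0" "F (\<sigma> w0) = - F w0" "weq k w0 (\<sigma> w0)"
      using less.prems(3) w0 by auto
    define G where "G = F - smul (F w0) (wd w0 - wd (\<sigma> w0))"
    have Gv: "G v = F v - F w0 * ((if v = w0 then 1 else 0) - (if v = \<sigma> w0 then 1 else 0))" for v
      unfolding G_def smul_def wd_def by simp
    have G1: "G w0 = 0" using Gv[of w0] h0 by simp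
    have G2: "G (\<sigma> w0) = 0" using Gv[of "\<sigma> w0"] h0 by simp
    have G3: "v \<noteq> w0 \<Longrightarrow> v \<noteq> \<sigma> w0 \<Longrightarrow> G v = F v" for v using Gv[of v] by simp
    have supp: "{w. G w \<noteq> 0} = {w. F w \<noteq> 0} - {w0, \<sigma> w0}"
    proof (intro set_eqI iffI)
      fix x assume "x \<in> {w. G w \<noteq> 0}"
      then have "G x \<noteq> 0" by simp
      then have "x \<noteq> w0" "x \<noteq> \<sigma> w0" using G1 G2 by auto
      then show "x \<in> {w. F w \<noteq> 0} - {w0, \<sigma> w0}" using G3 \<open>G x \<noteq> 0\<close> by auto
    next
      fix x assume "x \<in> {w. F w \<noteq> 0} - {w0, \<sigma> w0}"
      then show "x \<in> {w. G w \<noteq> 0}" using G3 by auto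
    qed
    have sub: "{w0, \<sigma> w0} \<subseteq> {w. F w \<noteq> 0}" using w0 h0 by auto
    have finG: "finite {w. G w \<noteq> 0}" using supp less.prems(1) by simp
    have "card {w. G w \<noteq> 0} = n - 2"
      unfolding supp using card_Diff_subset[OF _ sub] less.prems(1,2) h0(1) by simp
    moreover have "n \<ge> 2" using card_mono[OF less.prems(1) sub] h0(1) less.prems(2) by simp
    ultimately have lt: "card {w. G w \<noteq> 0} < n" by simp
    have HG: "\<forall>w. G w \<noteq> 0 \<longrightarrow> \<sigma> w \<noteq> w \<and> \<sigma> (\<sigma> w) = w \<and> G (\<sigma> w) = - G w \<and> weq k w (\<sigma> w)"
    proof (intro allI impI)
      fix v assume "G v \<noteq> 0"
      then have v12: "v \<noteq> w0" "v \<noteq> \<sigma> w0" using G1 G2 by auto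
      then have v: "v \<noteq> w0" "v \<noteq> \<sigma> w0" "F v \<noteq> 0" using G3 \<open>G v \<noteq> 0\<close> by auto
      have hv: "\<sigma> v \<noteq> v" "\<sigma> (\<sigma> v) = v" "F (\<sigma> v) = - F v" "weq k v (\<sigma> v)"
        using less.prems(3) v(3) by auto
      have "\<sigma> v \<noteq> w0" using v hv by metis
      moreover have "\<sigma> v \<noteq> \<sigma> w0" using v hv h0 by metis
      ultimately have "G (\<sigma> v) = F (\<sigma> v)" using G3 by simp
      then show "\<sigma> v \<noteq> v \<and> \<sigma> (\<sigma> v) = v \<and> G (\<sigma> v) = - G v \<and> weq k v (\<sigma> v)"
        using hv G3[OF v(1,2)] by simp
    qed
    have "G \<in> rel_ideal k" using less.IH[OF lt finG HOL.refl HG] .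
    moreover have "smul (F w0) (wd w0 - wd (\<sigma> w0)) \<in> rel_ideal k"
      by (rule I_smul[OF weq_I[OF h0(4)]])
    ultimately have "G + smul (F w0) (wd w0 - wd (\<sigma> w0)) \<in> rel_ideal k" by (rule I_add)
    then show ?thesis unfolding G_def by simp
  qed
qed

lemma invol:
  fixes F :: falg
  assumes "finite {w. F w \<noteq> 0}"
    "\<And>w. F w \<noteq> 0 \<Longrightarrow> \<sigma> w \<noteq> w \<and> \<sigma> (\<sigma> w) = w \<and> F (\<sigma> w) = - F w \<and> weq k w (\<sigma> w)"
  shows "F \<in> rel_ideal k"
  using invol_aux[OF assms(1) HOL.refl] assms(2) by blast

lemma usum_apply: "finite S \<Longrightarrow> usum S w = (if w \<in> S then 1 else 0)"
proof -
  assume fS: "finite S"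
  have "usum S w = (\<Sum>u\<in>S. if w = u then 1 else 0)" unfolding usum_def sum_apply_fun wd_def ..
  also have "\<dots> = (if w \<in> S then 1 else 0)" using sum.delta[OF fS, of w "\<lambda>_. 1::int"] by (simp add: eq_commute)
  finally show ?thesis .
qed

lemma finite_words: "finite {w :: nat list. set w \<subseteq> {0..k} \<and> length w = r}"
  by (rule finite_lists_length_eq) simp

lemma fin_V: "finite (V_wc k r i)"
  by (rule finite_subset[OF _ finite_words[of k r]]) (simp add: V_wc_def is_word_def subset_iff)
lemma fin_U: "finite (U_wc k r i)"
  by (rule finite_subset[OF _ finite_words[of k r]]) (simp add: U_wc_def is_word_def subset_iff)
lemma fin_UN: "finite (U_nwc_left k r i)"
  by (rule finite_subset[OF _ finite_words[of k r]]) (simp add: U_nwc_left_def is_word_def subset_iff)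

definition RH :: "nat \<Rightarrow> nat \<Rightarrow> falg" where
  "RH k r = ((\<Sum>i<r. smul ((-1) ^ i) (usum (V_wc k r i)))
      + (\<Sum>i\<in>{1..r-1}. smul ((-1) ^ i * int (r - i)) (usum (U_wc k r (i - 1))))
      + (\<Sum>i\<in>{1..r-2}. smul ((-1) ^ i) (usum (U_nwc_left k r (i - 1)))))"

lemma RH_apply: "RH k r w =
   (\<Sum>i<r. (-1) ^ i * (if w \<in> V_wc k r i then 1 else 0))
 + (\<Sum>i\<in>{1..r-1}. (-1) ^ i * int (r - i) * (if w \<in> U_wc k r (i - 1) then 1 else 0))
 + (\<Sum>i\<in>{1..r-2}. (-1) ^ i * (if w \<in> U_nwc_left k r (i - 1) then 1 else 0))"
  unfolding RH_def by (simp add: sum_apply_fun smul_def usum_apply fin_V fin_U fin_UN)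

lemma sum_ind: "finite I \<Longrightarrow> (\<Sum>i\<in>I. (c i :: int) * (if P i then 1 else 0)) = (\<Sum>i\<in>{i\<in>I. P i}. c i)"
proof -
  assume fI: "finite I"
  have "(\<Sum>i\<in>I. (c i :: int) * (if P i then 1 else 0)) = (\<Sum>i\<in>I. if P i then c i else 0)"
    by (rule sum.cong) auto
  also have "\<dots> = (\<Sum>i\<in>{i\<in>I. P i}. c i)" using sum.inter_filter[OF fI] by metis
  finally show ?thesis .
qed

definition Ew :: "nat \<Rightarrow> nat \<Rightarrow> nat list \<Rightarrow> int" where
  "Ew k r w = (\<Sum>a\<in>Zs k w. (-1) ^ (r - a))"



definition good :: "nat \<Rightarrow> nat \<Rightarrow> nat list \<Rightarrow> bool" where
  "good k r w \<longleftrightarrow> length w = r \<and> set w \<subseteq> {0..k}"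

lemma good_basic:
  assumes "good k r w" "1 \<le> r" "r \<le> k"
  shows "amiss k (set w) \<le> k" "is_word k w" "1 \<le> length w" "length w \<le> k" "set w \<subseteq> {0..k}" "length w = r"
proof -
  have g: "length w = r" "set w \<subseteq> {0..k}" using assms(1) unfolding good_def by auto
  have "card (set w) \<le> k" using card_length[of w] g assms by simp
  then have Sp: "set w \<noteq> {0..k}" using card_proper[OF g(2)] by simp
  show "amiss k (set w) \<le> k" using amiss_props[OF g(2) Sp] by simp
  show "is_word k w" unfolding is_word_def using g Sp by simp
  show "1 \<le> length w" "length w \<le> k" "set w \<subseteq> {0..k}" "length w = r" using g assms by auto
qed

lemma not_good_zero:
  assumes "\<not> good k r w"
  shows "Lf k r w = 0" "RH k r w = 0"
proof -
  show "Lf k r w = 0" using assms unfolding Lf_def good_def by auto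
  have "w \<notin> V_wc k r i" "w \<notin> U_wc k r i" "w \<notin> U_nwc_left k r i" for i
    using assms unfolding good_def V_wc_def U_wc_def U_nwc_left_def is_word_def by auto
  then show "RH k r w = 0" unfolding RH_apply by simp
qed

lemma mem_sets:
  assumes "good k r w" "1 \<le> r" "r \<le> k"
  shows "w \<in> V_wc k r i \<longleftrightarrow> (\<exists>j. hookV_at k w j) \<and> asc k w = i \<and> weak_connected k w"
    "w \<in> U_wc k r i \<longleftrightarrow> (\<exists>j. hookU_at k w j) \<and> asc k w = i \<and> weak_connected k w"
    "w \<in> U_nwc_left k r i \<longleftrightarrow> asc k w = i \<and> \<not> weak_connected k w \<and>
        (\<exists>j c p. hookU_at k w j \<and> is_umin k w c \<and> p < j \<and> w ! p = c)"
  using good_basic[OF assms] unfolding V_wc_def U_wc_def U_nwc_left_def by auto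

lemma sum_single:
  assumes "finite I"
  shows "(\<Sum>i\<in>I. (c i :: int) * (if i = x then 1 else 0)) = (if x \<in> I then c x else 0)"
proof -
  have "(\<Sum>i\<in>I. c i * (if i = x then 1 else 0)) = (\<Sum>i\<in>I. if x = i then c i else 0)"
    by (rule sum.cong) auto
  also have "\<dots> = (if x \<in> I then c x else 0)" by (rule sum.delta'[OF assms])
  finally show ?thesis .
qed

lemma sum_zero_if: "(\<Sum>i\<in>I. (c i :: int) * (if False then 1 else 0)) = 0"
  by simp

lemma nohook_zero:
  assumes "good k r w" "1 \<le> r" "r \<le> k" "Zs k w = {}" "\<not> (\<exists>j. hookV_at k w j)" "\<not> (\<exists>j. hookU_at k w j)"
  shows "Lf k r w = 0" "RH k r w = 0"
proof -
  note M = mem_sets[OF assms(1-3)]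
  show "Lf k r w = 0" unfolding Lf_def using assms(4) by simp
  have "w \<notin> V_wc k r i" "w \<notin> U_wc k r i" "w \<notin> U_nwc_left k r i" for i
    using M assms(5,6) by auto
  then show "RH k r w = 0" unfolding RH_apply by simp
qed

lemma sgn_suc: "a \<le> r \<Longrightarrow> 1 \<le> a \<Longrightarrow> (-1::int) ^ (r - (a - 1)) = - ((-1) ^ (r - a))"
proof -
  assume "a \<le> r" "1 \<le> a"
  then have "r - (a - 1) = Suc (r - a)" by simp
  then show ?thesis by simp
qed

lemma V_case:
  assumes "good k r w" "1 \<le> r" "r \<le> k" "hookV_at k w j" "Zs k w = {j - 1, j}" "1 \<le> j" "j \<le> r"
    "asc k w = r - j" "\<not> (\<exists>j. hookU_at k w j)"
  shows "Lf k r w = (-1) ^ (r - j)" "Ew k r w = 0"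
    "RH k r w = (if weak_connected k w then (-1) ^ (r - j) else 0)"
proof -
  note M = mem_sets[OF assms(1-3)]
  have g: "length w = r" "set w \<subseteq> {0..k}" using assms(1) unfolding good_def by auto
  have ne: "j - 1 \<noteq> j" using assms(6) by simp
  have "Lf k r w = (-1) ^ (r - (j - 1)) * int (j - 1) + (-1) ^ (r - j) * int j"
    unfolding Lf_def assms(5) using g ne by simp
  also have "\<dots> = (-1) ^ (r - j)" using sgn_suc[OF assms(7,6)] assms(6) by (simp add: of_nat_diff algebra_simps)
  finally show "Lf k r w = (-1) ^ (r - j)" .
  have "Ew k r w = (-1) ^ (r - (j - 1)) + (-1) ^ (r - j)" unfolding Ew_def assms(5) using ne by simp
  then show "Ew k r w = 0" using sgn_suc[OF assms(7,6)] by simp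
  have U0: "w \<notin> U_wc k r i" "w \<notin> U_nwc_left k r i" for i using M assms(9) by auto
  have V: "w \<in> V_wc k r i \<longleftrightarrow> weak_connected k w \<and> i = r - j" for i using M assms(4,8) by auto
  have R1: "(\<Sum>i<r. (-1) ^ i * (if w \<in> V_wc k r i then 1 else 0)) = (if weak_connected k w then (-1) ^ (r - j) else (0::int))"
  proof (cases "weak_connected k w")
    case True
    have "(\<Sum>i<r. (-1) ^ i * (if w \<in> V_wc k r i then 1 else 0)) = (\<Sum>i<r. (-1) ^ i * (if i = r - j then 1 else (0::int)))"
      using V True by simp
    also have "\<dots> = (-1) ^ (r - j)" using sum_single[of "{..<r}" "\<lambda>i. (-1) ^ i" "r - j"] assms(6,7) by simp
    finally show ?thesis using True by simp
  next
    case False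
    then show ?thesis using V by simp
  qed
  show "RH k r w = (if weak_connected k w then (-1) ^ (r - j) else 0)" unfolding RH_apply R1 using U0 by simp
qed

lemma U_case:
  assumes "good k r w" "1 \<le> r" "r \<le> k" "hookU_at k w j" "Zs k w = {j}" "1 \<le> j" "j < r"
    "asc k w = r - j - 1" "\<not> (\<exists>j. hookV_at k w j)" "weak_connected k w"
  shows "Lf k r w = RH k r w"
proof -
  note M = mem_sets[OF assms(1-3)]
  have g: "length w = r" "set w \<subseteq> {0..k}" using assms(1) unfolding good_def by auto
  have L: "Lf k r w = (-1) ^ (r - j) * int j" unfolding Lf_def assms(5) using g by simp
  have V0: "w \<notin> V_wc k r i" "w \<notin> U_nwc_left k r i" for i using M assms(9,10) by auto
  have U: "i \<in> {1..r-1} \<Longrightarrow> w \<in> U_wc k r (i - 1) \<longleftrightarrow> i = r - j" for i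
  proof -
    assume i: "i \<in> {1..r-1}"
    have "w \<in> U_wc k r (i - 1) \<longleftrightarrow> asc k w = i - 1" using M(2) assms(4,10) by auto
    also have "\<dots> \<longleftrightarrow> i = r - j" using assms(7,8) i by auto
    finally show ?thesis .
  qed
  have "(\<Sum>i\<in>{1..r-1}. (-1) ^ i * int (r - i) * (if w \<in> U_wc k r (i - 1) then 1 else 0)) =
        (\<Sum>i\<in>{1..r-1}. (-1) ^ i * int (r - i) * (if i = r - j then 1 else (0::int)))"
    using U by (intro sum.cong) auto
  also have "\<dots> = (-1) ^ (r - j) * int (r - (r - j))"
  proof -
    have "r - j \<in> {1..r-1}" using assms(6,7) by auto
    then show ?thesis using sum_single[of "{1..r-1}" "\<lambda>i. (-1) ^ i * int (r - i)" "r - j"] by simp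
  qed
  also have "\<dots> = (-1) ^ (r - j) * int j" using assms(7) by simp
  finally have R2: "(\<Sum>i\<in>{1..r-1}. (-1) ^ i * int (r - i) * (if w \<in> U_wc k r (i - 1) then 1 else 0)) = (-1) ^ (r - j) * int j" .
  show ?thesis unfolding RH_apply R2 L using V0 by simp
qed

lemma U_NW_case:
  assumes "good k r w" "1 \<le> r" "r \<le> k" "hookU_at k w j" "Zs k w = {j}" "1 \<le> j" "j < r"
    "asc k w = r - j - 1" "\<not> (\<exists>j. hookV_at k w j)" "NW k w"
  shows "RH k r w = (if leftw k w then Ew k r w else 0)"
proof -
  note M = mem_sets[OF assms(1-3)]
  note B = NW_basic[OF assms(10)]
  have g: "length w = r" "set w \<subseteq> {0..k}" using assms(1) unfolding good_def by auto
  have nwc: "\<not> weak_connected k w" using assms(10) unfolding NW_def by simp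
  have V0: "w \<notin> V_wc k r i" "w \<notin> U_wc k r i" for i using M assms(9) nwc by auto
  have E: "Ew k r w = (-1) ^ (r - j)" unfolding Ew_def assms(5) by simp
  let ?c = "umc k w"
  have ex_iff: "(\<exists>j c p. hookU_at k w j \<and> is_umin k w c \<and> p < j \<and> w ! p = c) \<longleftrightarrow> leftw k w"
  proof
    assume "\<exists>j c p. hookU_at k w j \<and> is_umin k w c \<and> p < j \<and> w ! p = c"
    then obtain j' c p where h: "hookU_at k w j'" "is_umin k w c" "p < j'" "w ! p = c" by blast
    have jZ: "j' \<in> Zs k w" using hookU_DA[OF B(1) g(2)] h(1) unfolding Zs_DA by auto
    have cc: "c = ?c" using umin_unique[OF g(2) B(1) h(2) B(3)] .
    have jl: "j' < length w" using h(1) unfolding hookU_at_def by simp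
    have "p < length (take j' w)" "take j' w ! p = w ! p" using h(3) jl by auto
    then have "w ! p \<in> set (take j' w)" by (metis nth_mem)
    then have "?c \<in> set (take j' w)" using h(4) cc by simp
    then show "leftw k w" unfolding leftw_def using jZ by blast
  next
    assume "leftw k w"
    then obtain a where a: "a \<in> Zs k w" "?c \<in> set (take a w)" unfolding leftw_def by blast
    then have "a = j" using assms(5) by simp
    then obtain p where p: "p < length (take j w)" "take j w ! p = ?c" using a(2) by (metis in_set_conv_nth)
    then have "p < j" "w ! p = ?c" by auto
    then show "\<exists>j c p. hookU_at k w j \<and> is_umin k w c \<and> p < j \<and> w ! p = c" using assms(4) B(3) by blast
  qed
  have j2: "2 \<le> j" if lw: "leftw k w"
  proof (rule ccontr)
    assume "\<not> 2 \<le> j"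
    then have j1: "j = 1" using assms(6) by simp
    obtain a where a: "a \<in> Zs k w" "?c \<in> set (take a w)" using lw unfolding leftw_def by blast
    then have c1: "?c \<in> set (take 1 w)" using assms(5) j1 by simp
    have l2: "1 < length w" using assms(7) j1 g by simp
    have "0 < length w" using l2 by linarith
    from Cons_nth_drop_Suc[OF this] have w0: "w = w ! 0 # drop 1 w" by simp
    from Cons_nth_drop_Suc[OF l2] have w1: "drop 1 w = w ! 1 # drop 2 w" by (simp add: numeral_2_eq_2)
    have "take 1 (w ! 0 # drop 1 w) = [w ! 0]" by simp
    then have t1: "take 1 w = [w ! 0]" using w0 by metis
    have c0: "?c = w ! 0" using c1 t1 by simp
    have e01: "w ! 0 = w ! 1" using assms(4) j1 unfolding hookU_at_def by simp
    have "count_list w ?c = count_list (w ! 0 # w ! 1 # drop 2 w) ?c" using w0 w1 by simp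
    also have "\<dots> \<ge> 2" using c0 e01 by simp
    finally show False using B(4) by simp
  qed
  have "(\<Sum>i\<in>{1..r-2}. (-1) ^ i * (if w \<in> U_nwc_left k r (i - 1) then 1 else 0)) = (if leftw k w then Ew k r w else (0::int))"
  proof (cases "leftw k w")
    case True
    have U: "i \<in> {1..r-2} \<Longrightarrow> w \<in> U_nwc_left k r (i - 1) \<longleftrightarrow> i = r - j" for i
    proof -
      assume i: "i \<in> {1..r-2}"
      have "w \<in> U_nwc_left k r (i - 1) \<longleftrightarrow> asc k w = i - 1" using M(3) ex_iff True nwc by simp
      also have "\<dots> \<longleftrightarrow> i = r - j" using assms(7,8) i by auto
      finally show ?thesis .
    qed
    have "(\<Sum>i\<in>{1..r-2}. (-1) ^ i * (if w \<in> U_nwc_left k r (i - 1) then 1 else 0)) =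
          (\<Sum>i\<in>{1..r-2}. (-1) ^ i * (if i = r - j then 1 else (0::int)))"
      using U by (intro sum.cong) auto
    also have "\<dots> = (-1) ^ (r - j)"
    proof -
      have "r - j \<in> {1..r-2}" using assms(7) j2[OF True] by auto
      then show ?thesis using sum_single[of "{1..r-2}" "\<lambda>i. (-1) ^ i" "r - j"] by simp
    qed
    finally show ?thesis using True E by simp
  next
    case False
    then have "w \<notin> U_nwc_left k r i" for i using M(3) ex_iff by simp
    then show ?thesis using False by simp
  qed
  then show ?thesis unfolding RH_apply using V0 by simp
qed



lemma good_sg: "good k r w \<Longrightarrow> NW k w \<Longrightarrow> good k r (sg k w)"
  using NW_sg_basic(5,6)[of k w] unfolding good_def by simp

lemma Lf_pair:
  assumes g: "good k r w" and r: "1 \<le> r" "r \<le> k" and nw: "NW k w" and lw: "leftw k w"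
  shows "Lf k r w + Lf k r (sg k w) = Ew k r w"
proof -
  note S = NW_sg_basic[OF nw] and SL = NW_sg_left[OF nw lw]
  have g2: "good k r (sg k w)" using good_sg[OF g nw] .
  let ?Z = "Zs k w"
  have gw: "length w = r" "set w \<subseteq> {0..k}" using g unfolding good_def by auto
  have gs: "length (sg k w) = r" "set (sg k w) \<subseteq> {0..k}" using g2 unfolding good_def by auto
  have Zr: "a \<in> ?Z \<Longrightarrow> 1 \<le> a \<and> a \<le> r" for a using SL(3) gw unfolding Zs_def by (cases a) auto
  have inj: "inj_on (\<lambda>a. a - 1) ?Z"
  proof (rule inj_onI)
    fix a b assume ab: "a \<in> ?Z" "b \<in> ?Z" "a - 1 = b - 1"
    have "1 \<le> a" "1 \<le> b" using Zr[OF ab(1)] Zr[OF ab(2)] by auto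
    then show "a = b" using ab(3) by linarith
  qed
  have "Lf k r (sg k w) = (\<Sum>a'\<in>Zs k (sg k w). (-1) ^ (r - a') * int a')"
    unfolding Lf_def using gs by simp
  also have "\<dots> = (\<Sum>a'\<in>(\<lambda>a. a - 1) ` ?Z. (-1) ^ (r - a') * int a')" using SL(1) by simp
  also have "\<dots> = (\<Sum>a\<in>?Z. (-1) ^ (r - (a - 1)) * int (a - 1))"
    by (subst sum.reindex[OF inj]) (simp only: comp_def)
  finally have L2: "Lf k r (sg k w) = (\<Sum>a\<in>?Z. (-1) ^ (r - (a - 1)) * int (a - 1))" .
  have L1: "Lf k r w = (\<Sum>a\<in>?Z. (-1) ^ (r - a) * int a)" unfolding Lf_def using gw by simp
  have "Lf k r w + Lf k r (sg k w) = (\<Sum>a\<in>?Z. (-1) ^ (r - a) * int a + (-1) ^ (r - (a - 1)) * int (a - 1))"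
    unfolding L1 L2 by (simp add: sum.distrib)
  also have "\<dots> = (\<Sum>a\<in>?Z. (-1) ^ (r - a))"
  proof (rule sum.cong[OF HOL.refl])
    fix a assume "a \<in> ?Z"
    then have a: "1 \<le> a" "a \<le> r" using Zr by auto
    show "(-1) ^ (r - a) * int a + (-1) ^ (r - (a - 1)) * int (a - 1) = ((-1) ^ (r - a) :: int)"
      using sgn_suc[OF a(2) a(1)] a(1) by (simp add: of_nat_diff algebra_simps)
  qed
  finally show ?thesis unfolding Ew_def .
qed

lemma F_NW:
  assumes g: "good k r w" and r: "1 \<le> r" "r \<le> k" and nw: "NW k w"
  shows "RH k r w = (if leftw k w then Ew k r w else 0)"
proof -
  note gb = good_basic[OF g r]
  have nwc: "\<not> weak_connected k w" "Zs k w \<noteq> {}" using nw unfolding NW_def by auto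
  from hook_cases[OF gb(1) gb(5) gb(3)]
  show ?thesis
  proof (elim disjE exE conjE)
    assume "Zs k w = {}" then show ?thesis using nwc by simp
  next
    fix j assume h: "hookV_at k w j" "Zs k w = {j - 1, j}" "1 \<le> j" "j \<le> length w"
      "asc k w = length w - j" "\<not> (\<exists>j. hookU_at k w j)"
    note V = V_case[OF g r h(1,2,3)] h gb(6)
    show ?thesis using V nwc by simp
  next
    fix j assume h: "hookU_at k w j" "Zs k w = {j}" "1 \<le> j" "j < length w"
      "asc k w = length w - j - 1" "\<not> (\<exists>j. hookV_at k w j)"
    show ?thesis using U_NW_case[OF g r h(1,2,3)] h gb(6) nw by simp
  qed
qed

lemma F_zero:
  assumes g: "good k r w" and r: "1 \<le> r" "r \<le> k" and nnw: "\<not> NW k w"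
  shows "Lf k r w = RH k r w"
proof -
  note gb = good_basic[OF g r]
  have d: "Zs k w = {} \<or> weak_connected k w" using nnw gb unfolding NW_def by auto
  from hook_cases[OF gb(1) gb(5) gb(3)]
  show ?thesis
  proof (elim disjE exE conjE)
    assume "Zs k w = {}" "\<not> (\<exists>j. hookV_at k w j)" "\<not> (\<exists>j. hookU_at k w j)"
    then show ?thesis using nohook_zero[OF g r] by simp
  next
    fix j assume h: "hookV_at k w j" "Zs k w = {j - 1, j}" "1 \<le> j" "j \<le> length w"
      "asc k w = length w - j" "\<not> (\<exists>j. hookU_at k w j)"
    then have wc: "weak_connected k w" using d by auto
    note V = V_case[OF g r h(1,2,3)] h gb(6)
    show ?thesis using V wc by simp
  next
    fix j assume h: "hookU_at k w j" "Zs k w = {j}" "1 \<le> j" "j < length w"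
      "asc k w = length w - j - 1" "\<not> (\<exists>j. hookV_at k w j)"
    then have wc: "weak_connected k w" using d by auto
    show ?thesis using U_case[OF g r h(1,2,3)] h gb(6) wc by simp
  qed
qed

lemma F_left:
  assumes g: "good k r w" and r: "1 \<le> r" "r \<le> k" and nw: "NW k w" and lw: "leftw k w"
  shows "Lf k r (sg k w) - RH k r (sg k w) = - (Lf k r w - RH k r w)"
proof -
  note S = NW_sg_basic[OF nw] and SL = NW_sg_left[OF nw lw]
  have g2: "good k r (sg k w)" using good_sg[OF g nw] .
  have "RH k r w = Ew k r w" using F_NW[OF g r nw] lw by simp
  moreover have "RH k r (sg k w) = 0" using F_NW[OF g2 r S(1)] SL(2) by simp
  ultimately show ?thesis using Lf_pair[OF g r nw lw] by simp
qed

lemma Lf_RH: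
  assumes r: "1 \<le> r" "r \<le> k"
  shows "Lf k r - RH k r \<in> rel_ideal k"
proof (rule invol[where \<sigma> = "sg k"])
  let ?F = "Lf k r - RH k r"
  have Fv: "?F w = Lf k r w - RH k r w" for w by simp
  have supp: "?F w \<noteq> 0 \<Longrightarrow> good k r w \<and> NW k w" for w
  proof -
    assume F: "?F w \<noteq> 0"
    have "good k r w"
    proof (rule ccontr)
      assume "\<not> good k r w"
      then have "Lf k r w = 0" "RH k r w = 0" using not_good_zero by auto
      then show False using F by (simp add: Fv)
    qed
    moreover then have "NW k w" using F F_zero[of k r w] r by (auto simp: Fv)
    ultimately show ?thesis by simp
  qed
  show "finite {w. ?F w \<noteq> 0}"
    by (rule finite_subset[OF _ finite_words[of k r]]) (use supp in \<open>auto simp: good_def\<close>)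
  fix w assume F: "?F w \<noteq> 0"
  then have gn: "good k r w" "NW k w" using supp by auto
  note S = NW_sg_basic[OF gn(2)]
  have anti: "?F (sg k w) = - ?F w"
  proof (cases "leftw k w")
    case True
    then show ?thesis using F_left[OF gn(1) r gn(2)] by (simp add: Fv)
  next
    case False
    have g2: "good k r (sg k w)" using good_sg[OF gn] .
    have l2: "leftw k (sg k w)" using NW_sg_right[OF gn(2) False] .
    have "?F (sg k (sg k w)) = - ?F (sg k w)" using F_left[OF g2 r S(1) l2] by (simp add: Fv)
    then show ?thesis using S(2) by simp
  qed
  show "sg k w \<noteq> w \<and> sg k (sg k w) = w \<and> ?F (sg k w) = - ?F w \<and> weq k w (sg k w)"
    using S anti by simp
qed

theorem lemma7p6:
  fixes k r :: nat
  assumes "1 \<le> r" and "r \<le> k"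
  shows "aeq k (p_el k r)
     ((\<Sum>i<r. smul ((-1) ^ i) (usum (V_wc k r i)))
      + (\<Sum>i\<in>{1..r-1}. smul ((-1) ^ i * int (r - i)) (usum (U_wc k r (i - 1))))
      + (\<Sum>i\<in>{1..r-2}. smul ((-1) ^ i) (usum (U_nwc_left k r (i - 1)))))"
proof -
  have "p_el k r - RH k r = (p_el k r - Lf k r) + (Lf k r - RH k r)" by simp
  also have "\<dots> \<in> rel_ideal k" using I_add[OF p_el_Lf[OF assms] Lf_RH[OF assms]] .
  finally show ?thesis unfolding aeq_def RH_def .
qed


end
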